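(* Let $X$ be a complex Banach space, $k,m\in\mathbb{N}$, $n=km$, and let $P:\mathbb{C}^n\to X$, $P(z)=\sum_{|A|=m}x_Az_A$, be an $m$-homogeneous tetrahedral polynomial. Let $\xi=(\xi_1,\ldots,\xi_n)$ be a vector of independent symmetric random variables and $\xi^{(1)},\ldots,\xi^{(m)}$ iid copies of $\xi$. Then for every $1\le p<\infty$, \[ \frac{1}{|\Pi_{k,m}|}\sum_{\pi\in\Pi_{k,m}}\big(\mathbb{E}\|L_\pi(\xi^{(1)},\ldots,\xi^{(m)})\|^p\big)^{1/p}\le\big(\mathbb{E}\|P(\xi)\|^p\big)^{1/p}\le\frac{e^m}{|\Pi_{k,m}|}\sum_{\pi\in\Pi_{k,m}}\big(\mathbb{E}\|L_\pi(\xi^{(1)},\ldots,\xi^{(m)})\|^p\big)^{1/p}. \]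
   Context: $z_A=\prod_{k\in A}z_k$ for $A\subseteq[n]=\{1,\dots,n\}$. $\Pi_{k,m}$ is the set of ordered $m$-tuples $\pi=(B_1,\ldots,B_m)$ of $k$-element subsets of $[n]$ whose union is $[n]$. For $\pi=(B_1,\dots,B_m)\in\Pi_{k,m}$, $L_\pi:(\mathbb{C}^n)^m\to X$ is the $m$-linear map $L_\pi(z^{(1)},\ldots,z^{(m)})=\sum_{i_1\in B_1}\cdots\sum_{i_m\in B_m}x_{\{i_1,\ldots,i_m\}}z^{(1)}_{i_1}\cdots z^{(m)}_{i_m}$. A random variable is symmetric if it has the same distribution as its negative. *)

theory Defs
  imports "HOL-Probability.Probability"
begin

text \<open>A complex Banach space: a real Banach space 'x together with a complex scalar
  multiplication sc extending the real one and making the norm complex-homogeneous.\<close>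
definition complex_scaling :: "(complex \<Rightarrow> 'x::real_normed_vector \<Rightarrow> 'x) \<Rightarrow> bool" where
  "complex_scaling sc \<longleftrightarrow>
     (\<forall>a b v. sc (a * b) v = sc a (sc b v)) \<and>
     (\<forall>a b v. sc (a + b) v = sc a v + sc b v) \<and>
     (\<forall>a v w. sc a (v + w) = sc a v + sc a w) \<and>
     (\<forall>r v. sc (complex_of_real r) v = r *\<^sub>R v) \<and>
     (\<forall>a v. norm (sc a v) = cmod a * norm v)"

definition zA :: "(nat \<Rightarrow> complex) \<Rightarrow> nat set \<Rightarrow> complex" where
  "zA z A = (\<Prod>k\<in>A. z k)"

definition tetra_poly :: "(complex \<Rightarrow> 'x \<Rightarrow> 'x::real_normed_vector) \<Rightarrow> nat \<Rightarrow> nat \<Rightarrow> (nat set \<Rightarrow> 'x) \<Rightarrow> (nat \<Rightarrow> complex) \<Rightarrow> 'x" where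
  "tetra_poly sc n m x z = (\<Sum>A\<in>{A. A \<subseteq> {1..n} \<and> card A = m}. sc (zA z A) (x A))"

text \<open>Pi_{k,m}: ordered m-tuples (B_1,...,B_m), encoded as extensional functions on {1..m},
  of k-element subsets of [n] whose union is [n].\<close>
definition Pi_km :: "nat \<Rightarrow> nat \<Rightarrow> nat \<Rightarrow> (nat \<Rightarrow> nat set) set" where
  "Pi_km n k m = {B \<in> {1..m} \<rightarrow>\<^sub>E Pow {1..n}. (\<forall>j\<in>{1..m}. card (B j) = k) \<and> (\<Union>j\<in>{1..m}. B j) = {1..n}}"

text \<open>L_pi(z^(1),...,z^(m)) = sum_{i_1 in B_1} ... sum_{i_m in B_m} x_{i_1,...,i_m} z^(1)_{i_1} ... z^(m)_{i_m};
  the tuple (i_1,...,i_m) is encoded as an extensional function i on {1..m}.\<close>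
definition L_pi :: "(complex \<Rightarrow> 'x \<Rightarrow> 'x::real_normed_vector) \<Rightarrow> nat \<Rightarrow> (nat set \<Rightarrow> 'x) \<Rightarrow> (nat \<Rightarrow> nat set)
    \<Rightarrow> (nat \<Rightarrow> nat \<Rightarrow> complex) \<Rightarrow> 'x" where
  "L_pi sc m x B z = (\<Sum>i\<in>(\<Pi>\<^sub>E j\<in>{1..m}. B j). sc (\<Prod>j\<in>{1..m}. z j (i j)) (x (i ` {1..m})))"

definition moment_norm :: "'a measure \<Rightarrow> ('a \<Rightarrow> 'x::real_normed_vector) \<Rightarrow> real \<Rightarrow> ennreal" where
  "moment_norm M f p =
     (let I = (\<integral>\<^sup>+ \<omega>. ennreal (norm (f \<omega>) powr p) \<partial>M)
      in if I = \<infinity> then \<infinity> else ennreal (enn2real I powr (1 / p)))"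

definition symmetric_rv :: "'a measure \<Rightarrow> ('a \<Rightarrow> complex) \<Rightarrow> bool" where
  "symmetric_rv M X \<longleftrightarrow> distr M borel X = distr M borel (\<lambda>\<omega>. - X \<omega>)"

end

theory Submission
  imports Defs
begin



definition fdmeas :: "'a measure \<Rightarrow> ('a \<Rightarrow> 'x::real_normed_vector) \<Rightarrow> bool" where
  "fdmeas M f \<longleftrightarrow> (\<exists>(N::nat) v r. (\<forall>i. r i \<in> borel_measurable M) \<and> (\<forall>\<omega>. f \<omega> = (\<Sum>i<N. r i \<omega> *\<^sub>R v i)))"

lemma sum_lessThan_add_split:
  "(\<Sum>i<N+K. g i) = (\<Sum>i<N. g i) + (\<Sum>i<K. g (N+i))" for g :: "nat \<Rightarrow> 'b::comm_monoid_add"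
  by (induction K) (simp_all add: add.assoc)

lemma fdmeas_norm:
  assumes "fdmeas M f"
  shows "(\<lambda>\<omega>. norm (f \<omega>)) \<in> borel_measurable M"
proof -
  obtain N :: nat and v r where r: "\<And>i. r i \<in> borel_measurable M" and f: "\<And>\<omega>. f \<omega> = (\<Sum>i<N. r i \<omega> *\<^sub>R v i)"
    using assms unfolding fdmeas_def by blast
  define \<Phi> where "\<Phi> \<omega> = (\<lambda>i. r i \<omega>)" for \<omega>
  have \<Phi>: "\<Phi> \<in> borel_measurable M"
    unfolding \<Phi>_def by (rule measurable_coordinatewise_then_product) (use r in auto)
  define G where "G y = norm (\<Sum>i<N. (y i :: real) *\<^sub>R v i)" for y :: "nat \<Rightarrow> real"
  have "continuous_on UNIV G"
    unfolding G_def by (intro continuous_intros continuous_on_product_coordinates)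
  hence G: "G \<in> borel_measurable borel" by (rule borel_measurable_continuous_onI)
  have "(\<lambda>\<omega>. norm (f \<omega>)) = G \<circ> \<Phi>" by (auto simp: G_def \<Phi>_def f fun_eq_iff)
  then show ?thesis using measurable_comp[OF \<Phi> G] by simp
qed

lemma fdmeas_zero: "fdmeas M (\<lambda>\<omega>. 0)"
  unfolding fdmeas_def by (rule exI[of _ 0], rule exI[of _ "\<lambda>_. 0"], rule exI[of _ "\<lambda>_ _. 0"]) auto

lemma fdmeas_scaleR_const:
  assumes "r \<in> borel_measurable M"
  shows "fdmeas M (\<lambda>\<omega>. r \<omega> *\<^sub>R v)"
  unfolding fdmeas_def by (rule exI[of _ 1], rule exI[of _ "\<lambda>_. v"], rule exI[of _ "\<lambda>_. r"]) (use assms in auto)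

lemma fdmeas_add:
  assumes "fdmeas M f" "fdmeas M g"
  shows "fdmeas M (\<lambda>\<omega>. f \<omega> + g \<omega>)"
proof -
  obtain N :: nat and v r where r: "\<And>i. r i \<in> borel_measurable M" and f: "\<And>\<omega>. f \<omega> = (\<Sum>i<N. r i \<omega> *\<^sub>R v i)"
    using assms(1) unfolding fdmeas_def by blast
  obtain K :: nat and w s where s: "\<And>i. s i \<in> borel_measurable M" and g: "\<And>\<omega>. g \<omega> = (\<Sum>i<K. s i \<omega> *\<^sub>R w i)"
    using assms(2) unfolding fdmeas_def by blast
  define v' where "v' i = (if i < N then v i else w (i - N))" for i
  define r' where "r' i = (if i < N then r i else s (i - N))" for i
  have "\<forall>i. r' i \<in> borel_measurable M" using r s by (auto simp: r'_def)
  moreover have "\<forall>\<omega>. f \<omega> + g \<omega> = (\<Sum>i<N+K. r' i \<omega> *\<^sub>R v' i)"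
  proof
    fix \<omega>
    have "(\<Sum>i<N+K. r' i \<omega> *\<^sub>R v' i) = (\<Sum>i<N. r' i \<omega> *\<^sub>R v' i) + (\<Sum>i<K. r' (N+i) \<omega> *\<^sub>R v' (N+i))"
      by (rule sum_lessThan_add_split)
    also have "\<dots> = f \<omega> + g \<omega>" by (simp add: f g r'_def v'_def)
    finally show "f \<omega> + g \<omega> = (\<Sum>i<N+K. r' i \<omega> *\<^sub>R v' i)" by simp
  qed
  ultimately show ?thesis unfolding fdmeas_def by (intro exI[of _ "N+K"] exI[of _ v'] exI[of _ r']) auto
qed

lemma fdmeas_sum:
  assumes "\<And>i. i \<in> I \<Longrightarrow> fdmeas M (f i)"
  shows "fdmeas M (\<lambda>\<omega>. \<Sum>i\<in>I. f i \<omega>)"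
proof (cases "finite I")
  case True
  then show ?thesis using assms
    by (induction I rule: finite_induct) (auto simp: fdmeas_zero intro!: fdmeas_add)
next
  case False
  then show ?thesis by (simp add: fdmeas_zero)
qed

lemma fdmeas_scale:
  assumes "fdmeas M f" "c \<in> borel_measurable M"
  shows "fdmeas M (\<lambda>\<omega>. c \<omega> *\<^sub>R f \<omega>)"
proof -
  obtain N :: nat and v r where r: "\<And>i. r i \<in> borel_measurable M" and f: "\<And>\<omega>. f \<omega> = (\<Sum>i<N. r i \<omega> *\<^sub>R v i)"
    using assms(1) unfolding fdmeas_def by blast
  have "\<forall>i. (\<lambda>\<omega>. c \<omega> * r i \<omega>) \<in> borel_measurable M" using r assms(2) by auto
  moreover have "\<forall>\<omega>. c \<omega> *\<^sub>R f \<omega> = (\<Sum>i<N. (c \<omega> * r i \<omega>) *\<^sub>R v i)"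
    by (simp add: f scaleR_sum_right)
  ultimately show ?thesis unfolding fdmeas_def by (intro exI[of _ N] exI[of _ v] exI[of _ "\<lambda>i \<omega>. c \<omega> * r i \<omega>"]) auto
qed

lemma fdmeas_comp:
  assumes "fdmeas N F" "U \<in> measurable M N"
  shows "fdmeas M (\<lambda>\<omega>. F (U \<omega>))"
proof -
  obtain K :: nat and v r where r: "\<And>i. r i \<in> borel_measurable N" and f: "\<And>\<omega>. F \<omega> = (\<Sum>i<K. r i \<omega> *\<^sub>R v i)"
    using assms(1) unfolding fdmeas_def by blast
  have "\<forall>i. (\<lambda>\<omega>. r i (U \<omega>)) \<in> borel_measurable M" using r assms(2) by auto
  moreover have "\<forall>\<omega>. F (U \<omega>) = (\<Sum>i<K. r i (U \<omega>) *\<^sub>R v i)" by (simp add: f)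
  ultimately show ?thesis unfolding fdmeas_def by (intro exI[of _ K] exI[of _ v] exI[of _ "\<lambda>i \<omega>. r i (U \<omega>)"]) auto
qed



lemma convex_pow_ineq:
  fixes u v lam p :: real
  assumes "0 \<le> u" "0 \<le> v" "0 \<le> lam" "lam \<le> 1" "1 \<le> p"
  shows "(lam * u + (1-lam) * v) powr p \<le> lam * u powr p + (1-lam) * v powr p"
proof -
  have pw: "t powr p \<le> t" if "0 \<le> t" "t \<le> 1" for t :: real
    using that assms(5) by (metis antisym_conv2 powr_le_one_le powr_nonneg_iff)
  show ?thesis
  proof (cases "u = 0")
    case True
    have "(lam * u + (1-lam) * v) powr p = (1-lam) powr p * v powr p"
      using True assms by (simp add: powr_mult)
    also have "\<dots> \<le> (1-lam) * v powr p"
      using assms pw[of "1-lam"] by (intro mult_right_mono) auto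
    finally show ?thesis using True assms by simp
  next
    case u: False
    show ?thesis
    proof (cases "v = 0")
      case True
      have "(lam * u + (1-lam) * v) powr p = lam powr p * u powr p"
        using True assms by (simp add: powr_mult)
      also have "\<dots> \<le> lam * u powr p"
        using assms pw[of "lam"] by (intro mult_right_mono) auto
      finally show ?thesis using True assms by simp
    next
      case False
      have "convex_on {0<..} (\<lambda>x::real. x powr p)"
        using assms(5) by (rule powr_convex)
      from convex_onD[OF this, of "1-lam" u v] show ?thesis using u False assms
        by (simp add: add.commute)
    qed
  qed
qed

lemma mink_pointwise:
  fixes u v a b p :: real
  assumes "0 \<le> u" "0 \<le> v" "0 < a" "0 < b" "1 \<le> p"
  shows "(u+v) powr p \<le> (a+b) powr (p-1) * (u powr p / a powr (p-1) + v powr p / b powr (p-1))"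
proof -
  define lam where "lam = a/(a+b)"
  have l1: "0 \<le> lam" "lam \<le> 1" "1 - lam = b/(a+b)" using assms by (auto simp: lam_def field_simps)
  have q1: "lam * (u/a) = u/(a+b)" "(1-lam) * (v/b) = v/(a+b)"
    using assms by (simp_all only: l1(3)) (auto simp: lam_def)
  have "u + v = (a+b) * (lam * (u/a) + (1-lam) * (v/b))"
    unfolding q1 using assms by (simp add: add_divide_distrib[symmetric])
  hence "(u+v) powr p = (a+b) powr p * (lam * (u/a) + (1-lam) * (v/b)) powr p"
    using assms l1 by (simp add: powr_mult)
  also have "\<dots> \<le> (a+b) powr p * (lam * (u/a) powr p + (1-lam) * (v/b) powr p)"
    using assms l1 by (intro mult_left_mono convex_pow_ineq) auto
  also have "\<dots> = (a+b) powr (p-1) * (u powr p / a powr (p-1) + v powr p / b powr (p-1))"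
  proof -
    have e1: "(a+b) powr p = (a+b) powr (p-1) * (a+b)" using powr_add[of "a+b" "p-1" 1] assms by simp
    have e2: "a powr p = a powr (p-1) * a" using powr_add[of "a" "p-1" 1] assms by simp
    have e3: "b powr p = b powr (p-1) * b" using powr_add[of "b" "p-1" 1] assms by simp
    have "a powr (p-1) > 0" "b powr (p-1) > 0" using assms by auto
    have alg: "X*S*(a/S*(U/(Pa*a)) + b/S*(V/(Pb*b))) = X*(U/Pa+V/Pb)"
      if "S > 0" "a > 0" "b > 0" "Pa > 0" "Pb > 0" for X S U V Pa Pb :: real
      using that by (simp add: field_simps)
    have d1: "(u/a) powr p = u powr p / (a powr (p-1) * a)" using assms e2 by (simp add: powr_divide)
    have d2: "(v/b) powr p = v powr p / (b powr (p-1) * b)" using assms e3 by (simp add: powr_divide)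
    have "(a+b) powr p * (lam * (u/a) powr p + (1-lam) * (v/b) powr p) =
      (a+b) powr (p-1) * (a+b) * (a/(a+b) * (u powr p/(a powr (p-1)*a)) + b/(a+b) * (v powr p / (b powr (p-1) * b)))"
      by (simp only: e1 d1 d2 l1(3)) (simp only: lam_def)
    also have "\<dots> = (a+b) powr (p-1) * (u powr p / a powr (p-1) + v powr p / b powr (p-1))"
      using assms \<open>a powr (p-1) > 0\<close> \<open>b powr (p-1) > 0\<close> by (intro alg) auto
    finally show ?thesis .
  qed
  finally show ?thesis .
qed


lemma ennreal_aux: fixes C x y X Y :: real
  assumes "0\<le>C" "0\<le>x" "0\<le>y" "0\<le>X" "0\<le>Y"
  shows "ennreal (C * (X/x + Y/y)) = ennreal C * (ennreal (1/x) * ennreal X + ennreal (1/y) * ennreal Y)"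
proof -
  have "ennreal (C * (X/x + Y/y)) = ennreal C * ennreal (1/x * X + 1/y * Y)"
    using assms by (subst ennreal_mult[symmetric]) auto
  also have "ennreal (1/x * X + 1/y * Y) = ennreal (1/x * X) + ennreal (1/y * Y)"
    using assms by (intro ennreal_plus) auto
  also have "ennreal (1/x * X) = ennreal (1/x) * ennreal X" using assms by (intro ennreal_mult) auto
  also have "ennreal (1/y * Y) = ennreal (1/y) * ennreal Y" using assms by (intro ennreal_mult) auto
  finally show ?thesis .
qed

lemma moment_norm_alt:
  "moment_norm M f p = (if (\<integral>\<^sup>+ \<omega>. ennreal (norm (f \<omega>) powr p) \<partial>M) = \<infinity> then \<infinity>
     else ennreal (enn2real (\<integral>\<^sup>+ \<omega>. ennreal (norm (f \<omega>) powr p) \<partial>M) powr (1 / p)))"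
  by (simp add: moment_norm_def Let_def)

lemma moment_norm_zero_AE:
  fixes f g :: "'a \<Rightarrow> 'x::real_normed_vector"
  assumes [measurable]: "(\<lambda>\<omega>. norm (f \<omega>)) \<in> borel_measurable M" and p: "1 \<le> p"
    and z: "(\<integral>\<^sup>+ \<omega>. ennreal (norm (f \<omega>) powr p) \<partial>M) = 0"
  shows "moment_norm M (\<lambda>\<omega>. f \<omega> + g \<omega>) p = moment_norm M g p"
proof -
  have "AE \<omega> in M. ennreal (norm (f \<omega>) powr p) = 0"
    using z by (subst (asm) nn_integral_0_iff_AE) auto
  hence "AE \<omega> in M. f \<omega> = 0" by eventually_elim simp
  hence "AE \<omega> in M. ennreal (norm (f \<omega> + g \<omega>) powr p) = ennreal (norm (g \<omega>) powr p)"
    by eventually_elim simp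
  hence "(\<integral>\<^sup>+ \<omega>. ennreal (norm (f \<omega> + g \<omega>) powr p) \<partial>M) = (\<integral>\<^sup>+ \<omega>. ennreal (norm (g \<omega>) powr p) \<partial>M)"
    by (rule nn_integral_cong_AE)
  thus ?thesis by (simp add: moment_norm_alt)
qed

lemma moment_norm_add:
  fixes f g :: "'a \<Rightarrow> 'x::real_normed_vector"
  assumes [measurable]: "(\<lambda>\<omega>. norm (f \<omega>)) \<in> borel_measurable M" "(\<lambda>\<omega>. norm (g \<omega>)) \<in> borel_measurable M" and p: "1 \<le> p"
  shows "moment_norm M (\<lambda>\<omega>. f \<omega> + g \<omega>) p \<le> moment_norm M f p + moment_norm M g p"
proof -
  define If where "If = (\<integral>\<^sup>+ \<omega>. ennreal (norm (f \<omega>) powr p) \<partial>M)"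
  define Ig where "Ig = (\<integral>\<^sup>+ \<omega>. ennreal (norm (g \<omega>) powr p) \<partial>M)"
  define Ih where "Ih = (\<integral>\<^sup>+ \<omega>. ennreal (norm (f \<omega> + g \<omega>) powr p) \<partial>M)"
  have mf: "moment_norm M f p = (if If = \<infinity> then \<infinity> else ennreal (enn2real If powr (1 / p)))"
    by (simp add: moment_norm_alt If_def)
  have mg: "moment_norm M g p = (if Ig = \<infinity> then \<infinity> else ennreal (enn2real Ig powr (1 / p)))"
    by (simp add: moment_norm_alt Ig_def)
  have mh: "moment_norm M (\<lambda>\<omega>. f \<omega> + g \<omega>) p = (if Ih = \<infinity> then \<infinity> else ennreal (enn2real Ih powr (1 / p)))"
    by (simp add: moment_norm_alt Ih_def)
  show ?thesis
  proof (cases "If = \<infinity> \<or> Ig = \<infinity>")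
    case True
    then show ?thesis using mf mg by auto
  next
    case False
    obtain A where A: "If = ennreal A" "0 \<le> A" using False by (cases If) auto
    obtain B where B: "Ig = ennreal B" "0 \<le> B" using False by (cases Ig) auto
    note AB = A(1) B(1) A(2) B(2)
    show ?thesis
    proof (cases "A = 0")
      case True
      have "moment_norm M (\<lambda>\<omega>. f \<omega> + g \<omega>) p = moment_norm M g p"
        by (rule moment_norm_zero_AE) (use True AB p in \<open>auto simp: If_def\<close>)
      then show ?thesis by simp
    next
      case A0: False
      show ?thesis
      proof (cases "B = 0")
        case True
        have "moment_norm M (\<lambda>\<omega>. g \<omega> + f \<omega>) p = moment_norm M f p"
          by (rule moment_norm_zero_AE) (use True AB p in \<open>auto simp: Ig_def\<close>)
        then show ?thesis by (simp add: add.commute)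
      next
        case B0: False
        define a where "a = A powr (1/p)"
        define b where "b = B powr (1/p)"
        have ab: "a > 0" "b > 0" using A0 B0 AB by (auto simp: a_def b_def)
        have Aa: "A = a powr p" "B = b powr p" using AB p by (auto simp: a_def b_def powr_powr)
        define C where "C = (a+b) powr (p-1)"
        have "Ih \<le> (\<integral>\<^sup>+ \<omega>. ennreal (C * (norm (f \<omega>) powr p / a powr (p-1) + norm (g \<omega>) powr p / b powr (p-1))) \<partial>M)"
          unfolding Ih_def
        proof (intro nn_integral_mono ennreal_leI)
          fix \<omega>
          have "norm (f \<omega> + g \<omega>) powr p \<le> (norm (f \<omega>) + norm (g \<omega>)) powr p"
            using p by (intro powr_mono2 norm_triangle_ineq) auto
          also have "\<dots> \<le> C * (norm (f \<omega>) powr p / a powr (p-1) + norm (g \<omega>) powr p / b powr (p-1))"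
            unfolding C_def using ab p by (intro mink_pointwise) auto
          finally show "norm (f \<omega> + g \<omega>) powr p \<le> C * (norm (f \<omega>) powr p / a powr (p-1) + norm (g \<omega>) powr p / b powr (p-1))" .
        qed
        also have "\<dots> = (\<integral>\<^sup>+ \<omega>. ennreal C * (ennreal (1 / a powr (p-1)) * ennreal (norm (f \<omega>) powr p)
             + ennreal (1 / b powr (p-1)) * ennreal (norm (g \<omega>) powr p)) \<partial>M)"
          using ab by (intro nn_integral_cong) (simp add: C_def ennreal_aux)
        also have "\<dots> = ennreal C * (ennreal (1 / a powr (p-1)) * If + ennreal (1 / b powr (p-1)) * Ig)"
          unfolding If_def Ig_def
          by (simp add: nn_integral_cmult nn_integral_add)
        also have "\<dots> = ennreal (C * (A / a powr (p-1) + B / b powr (p-1)))"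
          using AB ab by (simp add: C_def ennreal_aux)
        also have "C * (A / a powr (p-1) + B / b powr (p-1)) = (a+b) powr p"
        proof -
          have "A / a powr (p-1) = a" "B / b powr (p-1) = b"
            using ab unfolding Aa by (simp_all add: powr_diff)
          moreover have "C * (a + b) = (a+b) powr p"
            using ab unfolding C_def by (simp add: powr_diff)
          ultimately show ?thesis by simp
        qed
        finally have Ih_le: "Ih \<le> ennreal ((a+b) powr p)" .
        hence "Ih \<noteq> \<infinity>" by (auto simp: top_unique)
        moreover have "enn2real Ih \<le> (a+b) powr p"
          using Ih_le by (simp add: enn2real_leI)
        hence "enn2real Ih powr (1/p) \<le> ((a+b) powr p) powr (1/p)"
          using p by (intro powr_mono2) auto
        hence "enn2real Ih powr (1/p) \<le> a + b" using ab p by (simp add: powr_powr)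
        ultimately have "moment_norm M (\<lambda>\<omega>. f \<omega> + g \<omega>) p \<le> ennreal (a + b)"
          using mh by (simp add: ennreal_leI)
        also have "\<dots> = moment_norm M f p + moment_norm M g p"
          using mf mg AB ab by (simp add: a_def b_def ennreal_plus)
        finally show ?thesis .
      qed
    qed
  qed
qed


lemma moment_norm_zero: "p > 0 \<Longrightarrow> moment_norm M (\<lambda>\<omega>. 0) p = 0"
  by (simp add: moment_norm_alt)

lemma moment_norm_scale:
  fixes f :: "'a \<Rightarrow> 'x::real_normed_vector"
  assumes [measurable]: "(\<lambda>\<omega>. norm (f \<omega>)) \<in> borel_measurable M" and p: "1 \<le> p"
  shows "moment_norm M (\<lambda>\<omega>. c *\<^sub>R f \<omega>) p = ennreal \<bar>c\<bar> * moment_norm M f p"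
proof (cases "c = 0")
  case True
  then show ?thesis using p by (simp add: moment_norm_zero)
next
  case c: False
  define If where "If = (\<integral>\<^sup>+ \<omega>. ennreal (norm (f \<omega>) powr p) \<partial>M)"
  have "(\<integral>\<^sup>+ \<omega>. ennreal (norm (c *\<^sub>R f \<omega>) powr p) \<partial>M) = (\<integral>\<^sup>+ \<omega>. ennreal (\<bar>c\<bar> powr p) * ennreal (norm (f \<omega>) powr p) \<partial>M)"
    by (intro nn_integral_cong) (simp add: powr_mult ennreal_mult)
  also have "\<dots> = ennreal (\<bar>c\<bar> powr p) * If"
    unfolding If_def by (simp add: nn_integral_cmult)
  finally have I: "(\<integral>\<^sup>+ \<omega>. ennreal (norm (c *\<^sub>R f \<omega>) powr p) \<partial>M) = ennreal (\<bar>c\<bar> powr p) * If" .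
  show ?thesis
  proof (cases "If = \<infinity>")
    case True
    then show ?thesis using c I by (simp add: moment_norm_alt If_def[symmetric] ennreal_mult_top)
  next
    case False
    then obtain A where A: "If = ennreal A" "0 \<le> A" by (cases If) auto
    have "ennreal (\<bar>c\<bar> powr p) * If = ennreal (\<bar>c\<bar> powr p * A)" using A by (simp add: ennreal_mult)
    with I have I': "(\<integral>\<^sup>+ \<omega>. ennreal (norm (c *\<^sub>R f \<omega>) powr p) \<partial>M) = ennreal (\<bar>c\<bar> powr p * A)" by simp
    have "(\<bar>c\<bar> powr p * A) powr (1/p) = \<bar>c\<bar> * A powr (1/p)"
      using A p by (simp add: powr_mult powr_powr)
    moreover have "moment_norm M (\<lambda>\<omega>. c *\<^sub>R f \<omega>) p = ennreal ((\<bar>c\<bar> powr p * A) powr (1/p))"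
      unfolding moment_norm_alt I' using A(2) by simp
    moreover have "moment_norm M f p = ennreal (A powr (1/p))"
      unfolding moment_norm_alt If_def[symmetric] A(1) using A(2) by simp
    ultimately show ?thesis by (simp add: ennreal_mult)
  qed
qed

lemma moment_norm_sum:
  fixes f :: "'i \<Rightarrow> 'a \<Rightarrow> 'x::real_normed_vector"
  assumes "finite I" and fm: "\<And>i. i \<in> I \<Longrightarrow> fdmeas M (f i)" and p: "1 \<le> p"
  shows "moment_norm M (\<lambda>\<omega>. \<Sum>i\<in>I. f i \<omega>) p \<le> (\<Sum>i\<in>I. moment_norm M (f i) p)"
  using assms(1,2)
proof (induction I rule: finite_induct)
  case empty
  then show ?case using p by (simp add: moment_norm_zero)
next
  case (insert i I)
  have "moment_norm M (\<lambda>\<omega>. \<Sum>i\<in>insert i I. f i \<omega>) p = moment_norm M (\<lambda>\<omega>. f i \<omega> + (\<Sum>i\<in>I. f i \<omega>)) p"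
    using insert by simp
  also have "\<dots> \<le> moment_norm M (f i) p + moment_norm M (\<lambda>\<omega>. \<Sum>i\<in>I. f i \<omega>) p"
    using insert p by (intro moment_norm_add fdmeas_norm fdmeas_sum) auto
  also have "\<dots> \<le> moment_norm M (f i) p + (\<Sum>i\<in>I. moment_norm M (f i) p)"
    using insert by (intro add_left_mono) auto
  finally show ?case using insert by simp
qed

lemma moment_norm_distr:
  fixes F :: "'b \<Rightarrow> 'x::real_normed_vector"
  assumes "distr M N U = distr M N V" and [measurable]: "U \<in> measurable M N" "V \<in> measurable M N"
    "(\<lambda>z. norm (F z)) \<in> borel_measurable N"
  shows "moment_norm M (\<lambda>\<omega>. F (U \<omega>)) p = moment_norm M (\<lambda>\<omega>. F (V \<omega>)) p"
proof -
  have "(\<integral>\<^sup>+ \<omega>. ennreal (norm (F (U \<omega>)) powr p) \<partial>M) = (\<integral>\<^sup>+ z. ennreal (norm (F z) powr p) \<partial>distr M N U)"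
    by (simp add: nn_integral_distr)
  also have "\<dots> = (\<integral>\<^sup>+ \<omega>. ennreal (norm (F (V \<omega>)) powr p) \<partial>M)"
    by (simp add: assms(1) nn_integral_distr)
  finally show ?thesis by (simp add: moment_norm_alt)
qed




definition blk :: "(nat \<Rightarrow> nat set) \<Rightarrow> nat \<Rightarrow> nat \<Rightarrow> nat" where
  "blk B m i = (THE j. j \<in> {1..m} \<and> i \<in> B j)"

definition transv :: "nat \<Rightarrow> (nat \<Rightarrow> nat set) \<Rightarrow> nat set set" where
  "transv m B = (\<lambda>i. i ` {1..m}) ` (\<Pi>\<^sub>E j\<in>{1..m}. B j)"

lemma Pi_kmD:
  assumes "B \<in> Pi_km n k m"
  shows "\<And>j. j \<in> {1..m} \<Longrightarrow> B j \<subseteq> {1..n}" "\<And>j. j \<in> {1..m} \<Longrightarrow> card (B j) = k"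
    "(\<Union>j\<in>{1..m}. B j) = {1..n}" "B \<in> extensional {1..m}"
  using assms unfolding Pi_km_def by (auto simp: PiE_iff)

lemma Pi_km_disjoint:
  assumes B: "B \<in> Pi_km n k m" and n: "n = k * m"
    and a: "a \<in> {1..m}" and b: "b \<in> {1..m}" and ab: "a \<noteq> b"
  shows "B a \<inter> B b = {}"
proof (rule ccontr)
  assume "B a \<inter> B b \<noteq> {}"
  then obtain x where x: "x \<in> B a" "x \<in> B b" by auto
  note D = Pi_kmD[OF B]
  have fin: "finite (B j)" if "j \<in> {1..m}" for j using D(1)[OF that] finite_subset by blast
  have "{1..n} = (\<Union>j\<in>{1..m}-{a}. B j) \<union> (B a - {x})"
    using D(3) x b ab a by blast
  hence "n = card ((\<Union>j\<in>{1..m}-{a}. B j) \<union> (B a - {x}))" by (metis card_atLeastAtMost diff_Suc_1)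
  also have "\<dots> \<le> card (\<Union>j\<in>{1..m}-{a}. B j) + card (B a - {x})" by (rule card_Un_le)
  also have "\<dots> \<le> (\<Sum>j\<in>{1..m}-{a}. card (B j)) + card (B a - {x})"
    by (intro add_right_mono card_UN_le) auto
  also have "(\<Sum>j\<in>{1..m}-{a}. card (B j)) = (\<Sum>j\<in>{1..m}-{a}. k)"
    using D(2) by (intro sum.cong) auto
  also have "\<dots> = k * (m - 1)" using a by simp
  also have "card (B a - {x}) = k - 1" using D(2)[OF a] x fin[OF a] by simp
  finally have "n \<le> k * (m - 1) + (k - 1)" .
  moreover have "k \<noteq> 0" using D(2)[OF a] x fin[OF a] card_gt_0_iff by fastforce
  moreover obtain m' where "m = Suc m'" using a by (cases m) auto
  ultimately show False using n by (cases k) auto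
qed


context
  fixes B :: "nat \<Rightarrow> nat set" and n k m :: nat
  assumes B: "B \<in> Pi_km n k m" and n: "n = k * m"
begin

lemma blk_ex: "i \<in> {1..n} \<Longrightarrow> blk B m i \<in> {1..m} \<and> i \<in> B (blk B m i)"
proof -
  assume i: "i \<in> {1..n}"
  then obtain j where j: "j \<in> {1..m}" "i \<in> B j" using Pi_kmD(3)[OF B] by blast
  have "blk B m i = j" unfolding blk_def
    using Pi_km_disjoint[OF B n] j by (intro the_equality) blast+
  then show ?thesis using j by simp
qed

lemma blk_eq: "j \<in> {1..m} \<Longrightarrow> i \<in> B j \<Longrightarrow> blk B m i = j"
  unfolding blk_def using Pi_km_disjoint[OF B n] by (intro the_equality) blast+

lemma B_sub: "j \<in> {1..m} \<Longrightarrow> B j \<subseteq> {1..n}" using Pi_kmD(1)[OF B] .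

lemma disj': "j \<in> {1..m} \<Longrightarrow> j' \<in> {1..m} \<Longrightarrow> x \<in> B j \<Longrightarrow> x \<in> B j' \<Longrightarrow> j = j'"
  using Pi_km_disjoint[OF B n, of j j'] by blast

lemma PiE_inj:
  assumes f: "f \<in> (\<Pi>\<^sub>E j\<in>{1..m}. B j)"
  shows "inj_on f {1..m}"
proof (rule inj_onI)
  fix a b assume ab: "a \<in> {1..m}" "b \<in> {1..m}" "f a = f b"
  have "f a \<in> B a" "f b \<in> B b" using PiE_mem[OF f ab(1)] PiE_mem[OF f ab(2)] by auto
  then show "a = b" using disj'[OF ab(1,2), of "f a"] ab(3) by simp
qed

lemma transv_sub: "A \<in> transv m B \<Longrightarrow> A \<subseteq> {1..n} \<and> card A = m"
proof -
  assume "A \<in> transv m B"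
  then obtain f where f: "f \<in> (\<Pi>\<^sub>E j\<in>{1..m}. B j)" "A = f ` {1..m}" unfolding transv_def by auto
  have "f j \<in> {1..n}" if "j \<in> {1..m}" for j using PiE_mem[OF f(1) that] B_sub[OF that] by blast
  then have "A \<subseteq> {1..n}" using f(2) by blast
  moreover have "card A = m" using f PiE_inj[OF f(1)] by (simp add: card_image)
  ultimately show ?thesis by simp
qed

lemma transv_inj: "inj_on (\<lambda>f. f ` {1..m}) (\<Pi>\<^sub>E j\<in>{1..m}. B j)"
proof (rule inj_onI)
  fix f g assume f: "f \<in> (\<Pi>\<^sub>E j\<in>{1..m}. B j)" and g: "g \<in> (\<Pi>\<^sub>E j\<in>{1..m}. B j)"
    and eq: "f ` {1..m} = g ` {1..m}"
  have fe: "f \<in> extensional {1..m}" "g \<in> extensional {1..m}" using f g by (auto simp: PiE_iff)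
  show "f = g"
  proof (rule extensionalityI[OF fe])
    fix j assume j: "j \<in> {1..m}"
    then have "f j \<in> g ` {1..m}" using eq by auto
    then obtain j' where j': "j' \<in> {1..m}" "f j = g j'" by auto
    have "f j \<in> B j" "g j' \<in> B j'" using PiE_mem[OF f j] PiE_mem[OF g j'(1)] by auto
    then have "j = j'" using disj'[OF j j'(1), of "f j"] j'(2) by simp
    then show "f j = g j" using j' by simp
  qed
qed

lemma card_transv: "card (transv m B) = k ^ m"
proof -
  have "card (transv m B) = card (\<Pi>\<^sub>E j\<in>{1..m}. B j)"
    unfolding transv_def by (rule card_image[OF transv_inj])
  also have "\<dots> = (\<Prod>j\<in>{1..m}. card (B j))" by (rule card_PiE) simp
  also have "\<dots> = (\<Prod>j\<in>{1..m}. k)" using Pi_kmD(2)[OF B] by (intro prod.cong) auto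
  finally show ?thesis by simp
qed

lemma card_split:
  assumes A: "A \<subseteq> {1..n}"
  shows "card A = (\<Sum>j\<in>{1..m}. card (A \<inter> B j))"
proof -
  have "A = (\<Union>j\<in>{1..m}. A \<inter> B j)" using A Pi_kmD(3)[OF B] by blast
  moreover have "card (\<Union>j\<in>{1..m}. A \<inter> B j) = (\<Sum>j\<in>{1..m}. card (A \<inter> B j))"
    using disj' A by (intro card_UN_disjoint) (auto intro: finite_subset)
  ultimately show ?thesis by simp
qed

lemma transv_iff:
  assumes A: "A \<subseteq> {1..n}" "card A = m"
  shows "A \<in> transv m B \<longleftrightarrow> (\<forall>j\<in>{1..m}. odd (card (A \<inter> B j)))"
proof
  assume "A \<in> transv m B"
  then obtain f where f: "f \<in> (\<Pi>\<^sub>E j\<in>{1..m}. B j)" "A = f ` {1..m}" unfolding transv_def by auto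
  show "\<forall>j\<in>{1..m}. odd (card (A \<inter> B j))"
  proof
    fix j assume j: "j \<in> {1..m}"
    have "A \<inter> B j = {f j}"
    proof
      show "{f j} \<subseteq> A \<inter> B j" using f j by (auto simp: PiE_iff)
      show "A \<inter> B j \<subseteq> {f j}"
      proof
        fix a assume "a \<in> A \<inter> B j"
        then obtain j' where j': "j' \<in> {1..m}" "a = f j'" "f j' \<in> B j" using f by auto
        have "f j' \<in> B j'" using f j' by (auto simp: PiE_iff)
        then have "j' = j" using disj'[OF j j'(1), of "f j'"] j' by simp
        then show "a \<in> {f j}" using j' by simp
      qed
    qed
    then show "odd (card (A \<inter> B j))" by simp
  qed
next
  assume odd: "\<forall>j\<in>{1..m}. odd (card (A \<inter> B j))"
  have ge: "card (A \<inter> B j) \<ge> 1" if "j \<in> {1..m}" for j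
  proof -
    have o: "odd (card (A \<inter> B j))" using odd that by blast
    show ?thesis using odd_pos[OF o] by simp
  qed
  have one: "card (A \<inter> B j) = 1" if j: "j \<in> {1..m}" for j
  proof (rule ccontr)
    assume "card (A \<inter> B j) \<noteq> 1"
    with ge[OF j] have gt: "card (A \<inter> B j) > 1" by simp
    have "(\<Sum>j\<in>{1..m}. (1::nat)) < (\<Sum>j\<in>{1..m}. card (A \<inter> B j))"
      using ge gt j by (intro sum_strict_mono_ex1) auto
    then show False using card_split[OF A(1)] A(2) by simp
  qed
  define f where "f = (\<lambda>j\<in>{1..m}. THE a. A \<inter> B j = {a})"
  have fj: "A \<inter> B j = {f j}" if j: "j \<in> {1..m}" for j
  proof -
    obtain a where a: "A \<inter> B j = {a}" using one[OF j] card_1_singletonE by blast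
    have "f j = a" unfolding f_def using j a by auto
    then show ?thesis using a by simp
  qed
  have fB: "f j \<in> B j" if "j \<in> {1..m}" for j using fj[OF that] by blast
  have fe: "f \<in> extensional {1..m}" unfolding f_def by simp
  have fP: "f \<in> (\<Pi>\<^sub>E j\<in>{1..m}. B j)" using fB fe by (simp add: PiE_iff)
  have "f ` {1..m} = A"
  proof
    show "f ` {1..m} \<subseteq> A" using fj by blast
    show "A \<subseteq> f ` {1..m}"
    proof
      fix a assume a: "a \<in> A"
      then have "a \<in> {1..n}" using A by auto
      then have "blk B m a \<in> {1..m}" "a \<in> B (blk B m a)" using blk_ex by auto
      then have "A \<inter> B (blk B m a) = {f (blk B m a)}" "a \<in> A \<inter> B (blk B m a)" using fj[of "blk B m a"] a by auto
      then have "f (blk B m a) = a" by (metis singletonD)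
      then show "a \<in> f ` {1..m}" using \<open>blk B m a \<in> {1..m}\<close> by (metis imageI)
    qed
  qed
  then show "A \<in> transv m B" unfolding transv_def using fP by blast
qed

end




lemma pow_le_exp_fact: "real m ^ m \<le> exp (real m) * fact m"
proof (induction m)
  case 0
  then show ?case by simp
next
  case (Suc m)
  have e: "(real m + 1) ^ m \<le> exp 1 * real m ^ m"
  proof (cases "m = 0")
    case True
    then show ?thesis by simp
  next
    case False
    have "(1 + 1 / real m) ^ m \<le> exp 1"
      by (rule exp_ge_one_plus_x_over_n_power_n) (use False in auto)
    moreover have "(real m + 1) ^ m = (1 + 1 / real m) ^ m * real m ^ m"
      using False by (simp add: power_mult_distrib[symmetric] field_simps)
    ultimately show ?thesis by (simp add: mult_right_mono)
  qed
  have "real (Suc m) ^ Suc m = (real m + 1) * (real m + 1) ^ m" by (simp add: add.commute)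
  also have "\<dots> \<le> (real m + 1) * (exp 1 * real m ^ m)"
    using e by (intro mult_left_mono) auto
  also have "\<dots> \<le> (real m + 1) * (exp 1 * (exp (real m) * fact m))"
    using Suc.IH by (intro mult_left_mono) auto
  also have "\<dots> = exp (real (Suc m)) * fact (Suc m)"
    by (simp add: exp_add[symmetric] algebra_simps)
  finally show ?case .
qed

lemma fact_binom_le: "fact m * (n choose m) \<le> n ^ m"
proof (cases "m \<le> n")
  case True
  have "fact m * fact (n - m) * (n choose m) = fact n" by (rule binomial_fact_lemma[OF True])
  hence eq: "fact n = (fact m * (n choose m)) * fact (n - m)" by (simp add: algebra_simps)
  have "fact m * (n choose m) = fact n div fact (n - m)"
    by (subst eq) simp
  also have "\<dots> \<le> n ^ m" by (rule fact_div_fact_le_pow[OF True])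
  finally show ?thesis .
next
  case False
  then show ?thesis by (simp add: binomial_eq_0)
qed

lemma binom_bound: "real ((k * m) choose m) \<le> exp (real m) * real k ^ m"
proof -
  have "fact m * real ((k * m) choose m) \<le> real (k * m) ^ m"
  proof -
    have "real (fact m * ((k*m) choose m)) \<le> real ((k*m)^m)"
      using fact_binom_le[of m "k*m"] by (simp only: of_nat_le_iff)
    then show ?thesis by simp
  qed
  also have "\<dots> = real k ^ m * real m ^ m" by (simp add: power_mult_distrib)
  also have "\<dots> \<le> real k ^ m * (exp (real m) * fact m)"
    by (intro mult_left_mono pow_le_exp_fact) auto
  finally have "fact m * real ((k * m) choose m) \<le> fact m * (exp (real m) * real k ^ m)"
    by (simp add: algebra_simps)
  then show ?thesis by (subst (asm) mult_le_cancel_left_pos) auto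
qed




lemma Pi_km_nonempty: "Pi_km (k*m) k m \<noteq> {}"
proof -
  define B where "B = (\<lambda>j\<in>{1..m}. {(j-1)*k+1..j*k})"
  have "B \<in> {1..m} \<rightarrow>\<^sub>E Pow {1..k*m}"
  proof -
    have "{(j-1)*k+1..j*k} \<subseteq> {1..k*m}" if "j \<in> {1..m}" for j
    proof -
      have "j * k \<le> m * k" using that by (intro mult_le_mono1) auto
      then show ?thesis by (auto simp: mult.commute)
    qed
    then show ?thesis by (auto simp: B_def)
  qed
  moreover have "\<forall>j\<in>{1..m}. card (B j) = k"
  proof
    fix j assume j: "j \<in> {1..m}"
    then obtain j' where "j = Suc j'" by (cases j) auto
    then show "card (B j) = k" using j by (simp add: B_def)
  qed
  moreover have "(\<Union>j\<in>{1..m}. B j) = {1..k*m}"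
  proof
    show "(\<Union>j\<in>{1..m}. B j) \<subseteq> {1..k*m}" using calculation(1) by (auto simp: PiE_iff)
    show "{1..k*m} \<subseteq> (\<Union>j\<in>{1..m}. B j)"
    proof
      fix i assume i: "i \<in> {1..k*m}"
      then have k: "k > 0" by (cases k) auto
      define q where "q = (i - 1) div k"
      define j where "j = q + 1"
      have "q < m" unfolding q_def using i k by (auto simp: less_mult_imp_div_less mult.commute)
      then have j1: "j \<in> {1..m}" by (simp add: j_def)
      have a1: "q * k \<le> i - 1" unfolding q_def by (rule div_times_less_eq_dividend)
      have a2: "i - 1 < k + q * k" unfolding q_def by (rule dividend_less_div_times[OF k])
      have Bj: "B j = {q * k + 1 .. (q + 1) * k}" using j1 by (simp add: B_def j_def)
      have "i \<in> B j" unfolding Bj using a1 a2 i by (auto simp: algebra_simps)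
      then show "i \<in> (\<Union>j\<in>{1..m}. B j)" using j1 by blast
    qed
  qed
  ultimately have "B \<in> Pi_km (k*m) k m" unfolding Pi_km_def by blast
  then show ?thesis by blast
qed




lemma finite_Pi_km: "finite (Pi_km n k m)"
proof -
  have "Pi_km n k m \<subseteq> {1..m} \<rightarrow>\<^sub>E Pow {1..n}" unfolding Pi_km_def by auto
  moreover have "finite ({1..m} \<rightarrow>\<^sub>E Pow {1..n})" by (intro finite_PiE) auto
  ultimately show ?thesis by (rule finite_subset)
qed

lemma cnt_le:
  assumes n: "n = k * m" and A: "A \<subseteq> {1..n}" "card A = m" and A': "A' \<subseteq> {1..n}" "card A' = m"
  shows "card {B \<in> Pi_km n k m. A \<in> transv m B} \<le> card {B \<in> Pi_km n k m. A' \<in> transv m B}"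
proof -
  have finA: "finite A" "finite A'" using A A' finite_subset by auto
  obtain f where f: "bij_betw f A A'" using finite_same_card_bij[OF finA] A A' by auto
  have "card ({1..n} - A) = card ({1..n} - A')" using A A' finA by (simp add: card_Diff_subset)
  then obtain g where g: "bij_betw g ({1..n} - A) ({1..n} - A')"
    using finite_same_card_bij[of "{1..n} - A" "{1..n} - A'"] by auto
  define \<sigma> where "\<sigma> x = (if x \<in> A then f x else g x)" for x
  have s1: "bij_betw \<sigma> A A'" using f by (rule bij_betw_cong[THEN iffD1, rotated]) (simp add: \<sigma>_def)
  have s2: "bij_betw \<sigma> ({1..n} - A) ({1..n} - A')" using g
    by (rule bij_betw_cong[THEN iffD1, rotated]) (simp add: \<sigma>_def)
  have "bij_betw \<sigma> (A \<union> ({1..n} - A)) (A' \<union> ({1..n} - A'))"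
    by (rule bij_betw_combine[OF s1 s2]) auto
  moreover have "A \<union> ({1..n} - A) = {1..n}" "A' \<union> ({1..n} - A') = {1..n}" using A A' by auto
  ultimately have \<sigma>: "bij_betw \<sigma> {1..n} {1..n}" by simp
  have \<sigma>A: "\<sigma> ` A = A'" using s1 by (simp add: bij_betw_def)
  have inj\<sigma>: "inj_on \<sigma> {1..n}" and im\<sigma>: "\<sigma> ` {1..n} = {1..n}" using \<sigma> by (auto simp: bij_betw_def)
  define \<Phi> where "\<Phi> B = (\<lambda>j\<in>{1..m}. \<sigma> ` B j)" for B :: "nat \<Rightarrow> nat set"
  have "inj_on \<Phi> {B \<in> Pi_km n k m. A \<in> transv m B}"
  proof (rule inj_onI)
    fix B B' assume B: "B \<in> {B \<in> Pi_km n k m. A \<in> transv m B}" and B': "B' \<in> {B \<in> Pi_km n k m. A \<in> transv m B}"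
      and eq: "\<Phi> B = \<Phi> B'"
    have e: "B \<in> extensional {1..m}" "B' \<in> extensional {1..m}" using B B' Pi_kmD(4) by auto
    show "B = B'"
    proof (rule extensionalityI[OF e])
      fix j assume j: "j \<in> {1..m}"
      have "\<sigma> ` B j = \<sigma> ` B' j" using fun_cong[OF eq, of j] j by (simp add: \<Phi>_def)
      moreover have "B j \<subseteq> {1..n}" "B' j \<subseteq> {1..n}" using Pi_kmD(1)[of B n k m j] Pi_kmD(1)[of B' n k m j] B B' j by auto
      ultimately show "B j = B' j" using inj_on_image_eq_iff[OF inj\<sigma>] by blast
    qed
  qed
  moreover have "\<Phi> ` {B \<in> Pi_km n k m. A \<in> transv m B} \<subseteq> {B \<in> Pi_km n k m. A' \<in> transv m B}"
  proof
    fix C assume "C \<in> \<Phi> ` {B \<in> Pi_km n k m. A \<in> transv m B}"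
    then obtain B where B: "B \<in> Pi_km n k m" "A \<in> transv m B" and C: "C = \<Phi> B" by auto
    note D = Pi_kmD[OF B(1)]
    have sub: "\<sigma> ` B j \<subseteq> {1..n}" if "j \<in> {1..m}" for j using D(1)[OF that] im\<sigma> by auto
    have cardj: "card (\<sigma> ` B j) = k" if "j \<in> {1..m}" for j
      using D(1,2)[OF that] inj_on_subset[OF inj\<sigma>] by (simp add: card_image)
    have "(\<Union>j\<in>{1..m}. \<sigma> ` B j) = \<sigma> ` (\<Union>j\<in>{1..m}. B j)" by auto
    also have "\<dots> = {1..n}" using D(3) im\<sigma> by simp
    finally have un: "(\<Union>j\<in>{1..m}. C j) = {1..n}" by (simp add: C \<Phi>_def)
    have "C \<in> Pi_km n k m" unfolding Pi_km_def using sub cardj un by (auto simp: C \<Phi>_def)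
    moreover have "A' \<in> transv m C"
    proof -
      obtain h where h: "h \<in> (\<Pi>\<^sub>E j\<in>{1..m}. B j)" "A = h ` {1..m}" using B(2) unfolding transv_def by auto
      define h' where "h' = (\<lambda>j\<in>{1..m}. \<sigma> (h j))"
      have "h' \<in> (\<Pi>\<^sub>E j\<in>{1..m}. C j)" using h(1) by (auto simp: h'_def C \<Phi>_def PiE_iff)
      moreover have "h' ` {1..m} = A'" using h(2) \<sigma>A by (auto simp: h'_def image_image)
      ultimately show ?thesis unfolding transv_def by blast
    qed
    ultimately show "C \<in> {B \<in> Pi_km n k m. A' \<in> transv m B}" by simp
  qed
  moreover have "finite {B \<in> Pi_km n k m. A' \<in> transv m B}" using finite_Pi_km by auto
  ultimately show ?thesis by (rule card_inj_on_le)
qed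

lemma sum_cnt:
  assumes n: "n = k * m"
  shows "(\<Sum>A\<in>{A. A \<subseteq> {1..n} \<and> card A = m}. card {B \<in> Pi_km n k m. A \<in> transv m B}) = card (Pi_km n k m) * k ^ m"
proof -
  let ?S = "{A. A \<subseteq> {1..n} \<and> card A = m}"
  have finS: "finite ?S" by (rule finite_subset[of _ "Pow {1..n}"]) auto
  have "(\<Sum>A\<in>?S. card {B \<in> Pi_km n k m. A \<in> transv m B}) = (\<Sum>A\<in>?S. \<Sum>B\<in>Pi_km n k m. if A \<in> transv m B then 1 else 0)"
    using finite_Pi_km by (intro sum.cong refl) (simp add: sum.inter_filter[symmetric])
  also have "\<dots> = (\<Sum>B\<in>Pi_km n k m. \<Sum>A\<in>?S. if A \<in> transv m B then 1 else 0)" by (rule sum.swap)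
  also have "\<dots> = (\<Sum>B\<in>Pi_km n k m. k ^ m)"
  proof (rule sum.cong[OF refl])
    fix B assume B: "B \<in> Pi_km n k m"
    have "(\<Sum>A\<in>?S. if A \<in> transv m B then 1 else 0) = card {A \<in> ?S. A \<in> transv m B}"
      using finS by (simp add: sum.inter_filter[symmetric])
    also have "{A \<in> ?S. A \<in> transv m B} = transv m B" using transv_sub[OF B n] by auto
    also have "card (transv m B) = k ^ m" by (rule card_transv[OF B n])
    finally show "(\<Sum>A\<in>?S. if A \<in> transv m B then 1 else 0) = k ^ m" .
  qed
  finally show ?thesis by simp
qed




definition Fpi :: "(complex \<Rightarrow> 'x \<Rightarrow> 'x) \<Rightarrow> nat \<Rightarrow> (nat set \<Rightarrow> 'x) \<Rightarrow> (nat \<Rightarrow> nat set) \<Rightarrow> (nat \<Rightarrow> complex) \<Rightarrow> 'x::real_normed_vector" where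
  "Fpi sc m x B z = (\<Sum>A\<in>transv m B. sc (zA z A) (x A))"

lemma cs_facts:
  assumes "complex_scaling sc"
  shows "\<And>a b v. sc (a * b) v = sc a (sc b v)" "\<And>a b v. sc (a + b) v = sc a v + sc b v"
    "\<And>a v w. sc a (v + w) = sc a v + sc a w" "\<And>r v. sc (complex_of_real r) v = r *\<^sub>R v"
    "\<And>a v. norm (sc a v) = cmod a * norm v"
  using assms unfolding complex_scaling_def by blast+

lemma sc_of_real_mult:
  assumes "complex_scaling sc"
  shows "sc (complex_of_real r * a) v = r *\<^sub>R sc a v"
  using assms unfolding complex_scaling_def by simp

lemma sc_decomp:
  assumes "complex_scaling sc"
  shows "sc a v = Re a *\<^sub>R v + Im a *\<^sub>R sc \<i> v"
proof -
  have "a = complex_of_real (Re a) + complex_of_real (Im a) * \<i>" by (simp add: complex_eq_iff)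
  then have "sc a v = sc (complex_of_real (Re a)) v + sc (complex_of_real (Im a) * \<i>) v"
    using cs_facts(2)[OF assms] by metis
  also have "\<dots> = Re a *\<^sub>R v + Im a *\<^sub>R sc \<i> v"
    by (simp only: cs_facts(1,4)[OF assms])
  finally show ?thesis .
qed

lemma fdmeas_sc:
  assumes "complex_scaling sc" "a \<in> borel_measurable N"
  shows "fdmeas N (\<lambda>z. sc (a z) v)"
proof -
  have "(\<lambda>z. sc (a z) v) = (\<lambda>z. Re (a z) *\<^sub>R v + Im (a z) *\<^sub>R sc \<i> v)"
    by (rule ext) (rule sc_decomp[OF assms(1)])
  moreover have "(\<lambda>z. Re (a z)) \<in> borel_measurable N" "(\<lambda>z. Im (a z)) \<in> borel_measurable N"
    using assms(2) by measurable
  then have "fdmeas N (\<lambda>z. Re (a z) *\<^sub>R v + Im (a z) *\<^sub>R sc \<i> v)"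
    by (intro fdmeas_add fdmeas_scaleR_const)
  ultimately show ?thesis by simp
qed

lemma zA_meas:
  assumes "A \<subseteq> I"
  shows "(\<lambda>z. zA z A) \<in> borel_measurable (PiM I (\<lambda>_. borel))"
  unfolding zA_def
proof (rule borel_measurable_prod)
  fix i assume "i \<in> A"
  then have "i \<in> I" using assms by auto
  then show "(\<lambda>z. z i) \<in> borel_measurable (PiM I (\<lambda>_. borel))"
    by (rule measurable_component_singleton)
qed

lemma fdmeas_tetra:
  assumes "complex_scaling sc"
  shows "fdmeas (PiM {1..n} (\<lambda>_. borel)) (tetra_poly sc n m x)"
  unfolding tetra_poly_def
  by (intro fdmeas_sum fdmeas_sc[OF assms] zA_meas) auto

lemma zA_restrict: "A \<subseteq> I \<Longrightarrow> zA (restrict z I) A = zA z A"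
  unfolding zA_def by (intro prod.cong) auto

lemma tetra_restrict: "tetra_poly sc n m x (restrict z {1..n}) = tetra_poly sc n m x z"
  unfolding tetra_poly_def by (intro sum.cong refl) (simp add: zA_restrict)

context
  fixes B :: "nat \<Rightarrow> nat set" and n k m :: nat
  assumes B: "B \<in> Pi_km n k m" and n: "n = k * m"
begin

lemma fdmeas_Fpi:
  assumes "complex_scaling sc"
  shows "fdmeas (PiM {1..n} (\<lambda>_. borel)) (Fpi sc m x B)"
  unfolding Fpi_def
  by (intro fdmeas_sum fdmeas_sc[OF assms] zA_meas) (use transv_sub[OF B n] in auto)

lemma Fpi_restrict: "Fpi sc m x B (restrict z {1..n}) = Fpi sc m x B z"
  unfolding Fpi_def by (intro sum.cong refl) (use transv_sub[OF B n] in \<open>simp add: zA_restrict\<close>)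

lemma L_pi_eq: "L_pi sc m x B w = Fpi sc m x B (\<lambda>i. w (blk B m i) i)"
proof -
  have "Fpi sc m x B (\<lambda>i. w (blk B m i) i)
      = (\<Sum>f\<in>(\<Pi>\<^sub>E j\<in>{1..m}. B j). sc (zA (\<lambda>i. w (blk B m i) i) (f ` {1..m})) (x (f ` {1..m})))"
    unfolding Fpi_def transv_def by (rule sum.reindex[OF transv_inj[OF B n], unfolded comp_def])
  also have "\<dots> = L_pi sc m x B w"
    unfolding L_pi_def
  proof (intro sum.cong refl)
    fix f assume f: "f \<in> (\<Pi>\<^sub>E j\<in>{1..m}. B j)"
    have "zA (\<lambda>i. w (blk B m i) i) (f ` {1..m}) = (\<Prod>j\<in>{1..m}. w (blk B m (f j)) (f j))"
      unfolding zA_def by (subst prod.reindex[OF PiE_inj[OF B n f]]) simp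
    also have "\<dots> = (\<Prod>j\<in>{1..m}. w j (f j))"
      using f by (intro prod.cong refl) (simp add: blk_eq[OF B n] PiE_iff)
    finally show "sc (zA (\<lambda>i. w (blk B m i) i) (f ` {1..m})) (x (f ` {1..m})) = sc (\<Prod>j\<in>{1..m}. w j (f j)) (x (f ` {1..m}))"
      by simp
  qed
  finally show ?thesis by simp
qed

end




context
  fixes B :: "nat \<Rightarrow> nat set" and n k m :: nat
  assumes B: "B \<in> Pi_km n k m" and n: "n = k * m"
begin

lemma prod_blk:
  fixes \<epsilon> :: "nat \<Rightarrow> real"
  assumes A: "A \<subseteq> {1..n}"
  shows "(\<Prod>i\<in>A. \<epsilon> (blk B m i)) = (\<Prod>j\<in>{1..m}. \<epsilon> j ^ card (A \<inter> B j))"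
proof -
  have finA: "finite A" using A finite_subset by auto
  have im: "blk B m ` A \<subseteq> {1..m}" using blk_ex[OF B n] A by auto
  have "(\<Prod>i\<in>A. \<epsilon> (blk B m i)) = (\<Prod>j\<in>{1..m}. \<Prod>i\<in>{i \<in> A. blk B m i = j}. \<epsilon> (blk B m i))"
    using prod.group[OF finA _ im, of "\<lambda>i. \<epsilon> (blk B m i)"] by simp
  also have "\<dots> = (\<Prod>j\<in>{1..m}. \<Prod>i\<in>A \<inter> B j. \<epsilon> j)"
  proof (intro prod.cong)
    fix j assume j: "j \<in> {1..m}"
    show "{i \<in> A. blk B m i = j} = A \<inter> B j"
    proof
      show "{i \<in> A. blk B m i = j} \<subseteq> A \<inter> B j" using blk_ex[OF B n] A by auto
      show "A \<inter> B j \<subseteq> {i \<in> A. blk B m i = j}" using blk_eq[OF B n j] by auto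
    qed
    fix i assume "i \<in> A \<inter> B j"
    then show "\<epsilon> (blk B m i) = \<epsilon> j" using blk_eq[OF B n j] by auto
  qed simp
  also have "\<dots> = (\<Prod>j\<in>{1..m}. \<epsilon> j ^ card (A \<inter> B j))" by simp
  finally show ?thesis .
qed

lemma sign_sum:
  assumes A: "A \<subseteq> {1..n}" "card A = m"
  shows "(\<Sum>\<epsilon>\<in>(\<Pi>\<^sub>E j\<in>{1..m}. {-1, 1::real}). (\<Prod>j\<in>{1..m}. \<epsilon> j) * (\<Prod>i\<in>A. \<epsilon> (blk B m i)))
       = (if A \<in> transv m B then 2 ^ m else 0)"
proof -
  define c where "c j = card (A \<inter> B j)" for j
  have "(\<Sum>\<epsilon>\<in>(\<Pi>\<^sub>E j\<in>{1..m}. {-1, 1::real}). (\<Prod>j\<in>{1..m}. \<epsilon> j) * (\<Prod>i\<in>A. \<epsilon> (blk B m i)))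
      = (\<Sum>\<epsilon>\<in>(\<Pi>\<^sub>E j\<in>{1..m}. {-1, 1::real}). \<Prod>j\<in>{1..m}. \<epsilon> j ^ Suc (c j))"
    by (intro sum.cong refl) (simp add: prod_blk[OF A(1)] prod.distrib[symmetric] c_def)
  also have "\<dots> = (\<Prod>j\<in>{1..m}. \<Sum>e\<in>{-1, 1::real}. e ^ Suc (c j))"
    by (rule prod_sum_PiE[symmetric]) auto
  also have "\<dots> = (\<Prod>j\<in>{1..m}. if odd (c j) then 2 else 0)"
    by (intro prod.cong refl) auto
  also have "\<dots> = (if \<forall>j\<in>{1..m}. odd (c j) then 2 ^ m else 0)"
  proof (cases "\<forall>j\<in>{1..m}. odd (c j)")
    case True
    then show ?thesis by simp
  next
    case False
    then obtain j where "j \<in> {1..m}" "\<not> odd (c j)" by auto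
    then show ?thesis using False by (subst prod_zero) auto
  qed
  also have "\<dots> = (if A \<in> transv m B then 2 ^ m else 0)"
    using transv_iff[OF B n A] by (simp add: c_def)
  finally show ?thesis .
qed

lemma sign_avg:
  assumes sc: "complex_scaling sc"
  shows "(\<Sum>\<epsilon>\<in>(\<Pi>\<^sub>E j\<in>{1..m}. {-1, 1::real}). (\<Prod>j\<in>{1..m}. \<epsilon> j) *\<^sub>R
            tetra_poly sc n m x (\<lambda>i. complex_of_real (\<epsilon> (blk B m i)) * z i))
       = (2 ^ m :: real) *\<^sub>R Fpi sc m x B z"
proof -
  let ?E = "\<Pi>\<^sub>E j\<in>{1..m}. {-1, 1::real}"
  let ?S = "{A. A \<subseteq> {1..n} \<and> card A = m}"
  define g where "g A = sc (zA z A) (x A)" for A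
  have finS: "finite ?S" by (rule finite_subset[of _ "Pow {1..n}"]) auto
  have finE: "finite ?E" by (intro finite_PiE) auto
  have zA_e: "zA (\<lambda>i. complex_of_real (\<epsilon> (blk B m i)) * z i) A = complex_of_real (\<Prod>i\<in>A. \<epsilon> (blk B m i)) * zA z A"
    for \<epsilon> :: "nat \<Rightarrow> real" and A
    unfolding zA_def of_real_prod by (simp add: prod.distrib)
  have "(\<Sum>\<epsilon>\<in>?E. (\<Prod>j\<in>{1..m}. \<epsilon> j) *\<^sub>R tetra_poly sc n m x (\<lambda>i. complex_of_real (\<epsilon> (blk B m i)) * z i))
      = (\<Sum>\<epsilon>\<in>?E. \<Sum>A\<in>?S. ((\<Prod>j\<in>{1..m}. \<epsilon> j) * (\<Prod>i\<in>A. \<epsilon> (blk B m i))) *\<^sub>R g A)"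
    unfolding tetra_poly_def scaleR_sum_right
  proof (intro sum.cong refl)
    fix \<epsilon> :: "nat \<Rightarrow> real" and A
    show "(\<Prod>j\<in>{1..m}. \<epsilon> j) *\<^sub>R sc (zA (\<lambda>i. complex_of_real (\<epsilon> (blk B m i)) * z i) A) (x A)
        = ((\<Prod>j\<in>{1..m}. \<epsilon> j) * (\<Prod>i\<in>A. \<epsilon> (blk B m i))) *\<^sub>R g A"
      by (simp only: zA_e sc_of_real_mult[OF sc] g_def scaleR_scaleR)
  qed
  also have "\<dots> = (\<Sum>A\<in>?S. \<Sum>\<epsilon>\<in>?E. ((\<Prod>j\<in>{1..m}. \<epsilon> j) * (\<Prod>i\<in>A. \<epsilon> (blk B m i))) *\<^sub>R g A)"
    by (rule sum.swap)
  also have "\<dots> = (\<Sum>A\<in>?S. (\<Sum>\<epsilon>\<in>?E. (\<Prod>j\<in>{1..m}. \<epsilon> j) * (\<Prod>i\<in>A. \<epsilon> (blk B m i))) *\<^sub>R g A)"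
    by (simp add: scaleR_sum_left)
  also have "\<dots> = (\<Sum>A\<in>?S. if A \<in> transv m B then (2 ^ m :: real) *\<^sub>R g A else 0)"
  proof (intro sum.cong refl)
    fix A assume "A \<in> ?S"
    then have "(\<Sum>\<epsilon>\<in>?E. (\<Prod>j\<in>{1..m}. \<epsilon> j) * (\<Prod>i\<in>A. \<epsilon> (blk B m i))) = (if A \<in> transv m B then 2 ^ m else 0)"
      by (intro sign_sum) auto
    then show "(\<Sum>\<epsilon>\<in>?E. (\<Prod>j\<in>{1..m}. \<epsilon> j) * (\<Prod>i\<in>A. \<epsilon> (blk B m i))) *\<^sub>R g A = (if A \<in> transv m B then (2 ^ m :: real) *\<^sub>R g A else 0)"
      by simp
  qed
  also have "\<dots> = (\<Sum>A\<in>{A \<in> ?S. A \<in> transv m B}. (2 ^ m :: real) *\<^sub>R g A)"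
    by (rule sum.inter_filter[OF finS, symmetric])
  also have "{A \<in> ?S. A \<in> transv m B} = transv m B" using transv_sub[OF B n] by auto
  also have "(\<Sum>A\<in>transv m B. (2 ^ m :: real) *\<^sub>R g A) = (2 ^ m :: real) *\<^sub>R Fpi sc m x B z"
    by (simp add: Fpi_def g_def scaleR_sum_right)
  finally show ?thesis .
qed

end

lemma sum_Fpi:
  assumes n: "n = k * m"
  shows "(\<Sum>B\<in>Pi_km n k m. Fpi sc m x B z)
       = (\<Sum>A\<in>{A. A \<subseteq> {1..n} \<and> card A = m}. real (card {B \<in> Pi_km n k m. A \<in> transv m B}) *\<^sub>R sc (zA z A) (x A))"
proof -
  let ?S = "{A. A \<subseteq> {1..n} \<and> card A = m}"
  define g where "g A = sc (zA z A) (x A)" for A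
  have finS: "finite ?S" by (rule finite_subset[of _ "Pow {1..n}"]) auto
  have "(\<Sum>B\<in>Pi_km n k m. Fpi sc m x B z) = (\<Sum>B\<in>Pi_km n k m. \<Sum>A\<in>?S. if A \<in> transv m B then g A else 0)"
  proof (intro sum.cong refl)
    fix B assume B: "B \<in> Pi_km n k m"
    have "(\<Sum>A\<in>?S. if A \<in> transv m B then g A else 0) = (\<Sum>A\<in>{A \<in> ?S. A \<in> transv m B}. g A)"
      by (rule sum.inter_filter[OF finS, symmetric])
    also have "{A \<in> ?S. A \<in> transv m B} = transv m B" using transv_sub[OF B n] by auto
    finally show "Fpi sc m x B z = (\<Sum>A\<in>?S. if A \<in> transv m B then g A else 0)"
      by (simp add: Fpi_def g_def)
  qed
  also have "\<dots> = (\<Sum>A\<in>?S. \<Sum>B\<in>Pi_km n k m. if A \<in> transv m B then g A else 0)"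
    by (rule sum.swap)
  also have "\<dots> = (\<Sum>A\<in>?S. real (card {B \<in> Pi_km n k m. A \<in> transv m B}) *\<^sub>R g A)"
  proof (intro sum.cong refl)
    fix A
    have "(\<Sum>B\<in>Pi_km n k m. if A \<in> transv m B then g A else 0) = (\<Sum>B\<in>{B \<in> Pi_km n k m. A \<in> transv m B}. g A)"
      by (rule sum.inter_filter[OF finite_Pi_km, symmetric])
    also have "\<dots> = real (card {B \<in> Pi_km n k m. A \<in> transv m B}) *\<^sub>R g A"
      by (simp add: sum_constant_scaleR)
    finally show "(\<Sum>B\<in>Pi_km n k m. if A \<in> transv m B then g A else 0) = real (card {B \<in> Pi_km n k m. A \<in> transv m B}) *\<^sub>R g A" .
  qed
  finally show ?thesis by (simp add: g_def)
qed




lemma (in prob_space) distr_flip: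
  fixes \<xi> :: "nat \<Rightarrow> 'a \<Rightarrow> complex" and s :: "nat \<Rightarrow> real"
  assumes indep: "indep_vars (\<lambda>_. borel) \<xi> I" and I: "I \<noteq> {}"
    and symm: "\<forall>i\<in>I. symmetric_rv M (\<xi> i)"
    and s: "\<forall>i\<in>I. s i = 1 \<or> s i = -1"
  shows "distr M (PiM I (\<lambda>_. borel)) (\<lambda>\<omega>. \<lambda>i\<in>I. complex_of_real (s i) * \<xi> i \<omega>)
       = distr M (PiM I (\<lambda>_. borel)) (\<lambda>\<omega>. \<lambda>i\<in>I. \<xi> i \<omega>)"
proof -
  have rv: "\<And>i. i \<in> I \<Longrightarrow> random_variable borel (\<xi> i)" using indep unfolding indep_vars_def by auto
  have rv2: "\<And>i. i \<in> I \<Longrightarrow> random_variable borel (\<lambda>\<omega>. complex_of_real (s i) * \<xi> i \<omega>)"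
    using rv by auto
  have ind2: "indep_vars (\<lambda>_. borel) (\<lambda>i \<omega>. complex_of_real (s i) * \<xi> i \<omega>) I"
    using indep_vars_compose2[OF indep, of "\<lambda>i z. complex_of_real (s i) * z" "\<lambda>_. borel"] by auto
  have "distr M (PiM I (\<lambda>_. borel)) (\<lambda>\<omega>. \<lambda>i\<in>I. complex_of_real (s i) * \<xi> i \<omega>)
      = PiM I (\<lambda>i. distr M borel (\<lambda>\<omega>. complex_of_real (s i) * \<xi> i \<omega>))"
    using ind2 indep_vars_iff_distr_eq_PiM'[OF I rv2] by simp
  also have "\<dots> = PiM I (\<lambda>i. distr M borel (\<xi> i))"
  proof (rule PiM_cong)
    fix i assume i: "i \<in> I"
    show "distr M borel (\<lambda>\<omega>. complex_of_real (s i) * \<xi> i \<omega>) = distr M borel (\<xi> i)"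
    proof (cases "s i = 1")
      case True
      then show ?thesis by simp
    next
      case False
      with s i have "s i = -1" by auto
      then show ?thesis using symm i unfolding symmetric_rv_def by simp
    qed
  qed simp
  also have "\<dots> = distr M (PiM I (\<lambda>_. borel)) (\<lambda>\<omega>. \<lambda>i\<in>I. \<xi> i \<omega>)"
    using indep indep_vars_iff_distr_eq_PiM'[OF I rv] by simp
  finally show ?thesis .
qed


lemma (in prob_space) distr_blocks:
  fixes \<xi> :: "nat \<Rightarrow> 'a \<Rightarrow> complex" and \<eta> :: "nat \<Rightarrow> nat \<Rightarrow> 'a \<Rightarrow> complex"
  assumes indep: "indep_vars (\<lambda>_. borel) \<xi> I" and I: "I \<noteq> {}" "finite I" and J: "finite J"
    and cindep: "indep_vars (\<lambda>_. PiM I (\<lambda>_. borel)) (\<lambda>j \<omega>. \<lambda>i\<in>I. \<eta> j i \<omega>) J"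
    and cdist: "\<forall>j\<in>J. distr M (PiM I (\<lambda>_. borel)) (\<lambda>\<omega>. \<lambda>i\<in>I. \<eta> j i \<omega>)
                      = distr M (PiM I (\<lambda>_. borel)) (\<lambda>\<omega>. \<lambda>i\<in>I. \<xi> i \<omega>)"
    and b: "\<forall>i\<in>I. b i \<in> J"
  shows "distr M (PiM I (\<lambda>_. borel)) (\<lambda>\<omega>. \<lambda>i\<in>I. \<eta> (b i) i \<omega>)
       = distr M (PiM I (\<lambda>_. borel)) (\<lambda>\<omega>. \<lambda>i\<in>I. \<xi> i \<omega>)"
proof -
  let ?B = "PiM I (\<lambda>_. borel :: complex measure)"
  let ?R = "PiM J (\<lambda>_. ?B)"
  define \<mu> where "\<mu> i = (if i \<in> I then distr M borel (\<xi> i) else return borel 0)" for i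
  define Q where "Q = distr M ?B (\<lambda>\<omega>. \<lambda>i\<in>I. \<xi> i \<omega>)"
  have J0: "J \<noteq> {}" using I b by auto
  have rv: "\<And>i. i \<in> I \<Longrightarrow> random_variable borel (\<xi> i)" using indep unfolding indep_vars_def by auto
  have rvY: "\<And>j. j \<in> J \<Longrightarrow> random_variable ?B (\<lambda>\<omega>. \<lambda>i\<in>I. \<eta> j i \<omega>)"
    using cindep unfolding indep_vars_def by auto
  have Q: "Q = PiM I \<mu>"
  proof -
    have "Q = PiM I (\<lambda>i. distr M borel (\<xi> i))"
      unfolding Q_def using indep indep_vars_iff_distr_eq_PiM'[OF I(1) rv] by simp
    also have "\<dots> = PiM I \<mu>" by (rule PiM_cong) (auto simp: \<mu>_def)
    finally show ?thesis .
  qed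
  have probmu: "prob_space (\<mu> i)" for i unfolding \<mu>_def
    using rv by (auto intro: prob_space_distr prob_space_return)
  have smu: "sets (\<mu> i) = sets borel" "space (\<mu> i) = UNIV" for i
    by (auto simp: \<mu>_def)
  interpret PS: product_prob_space \<mu> by (intro product_prob_spaceI probmu)
  have probQ: "prob_space Q" unfolding Q_def
    by (rule prob_space_distr) (use rv in \<open>auto\<close>)
  interpret QQ: product_prob_space "\<lambda>_. Q" by (intro product_prob_spaceI probQ)
  have sQ: "sets Q = sets ?B" by (simp add: Q_def)
  define Yv where "Yv \<omega> = (\<lambda>j\<in>J. \<lambda>i\<in>I. \<eta> j i \<omega>)" for \<omega>
  have Yvm: "Yv \<in> measurable M ?R" unfolding Yv_def
    by (rule measurable_restrict) (use rvY in auto)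
  have Y: "distr M ?R Yv = PiM J (\<lambda>_. Q)"
  proof -
    have "distr M ?R Yv = PiM J (\<lambda>j. distr M ?B (\<lambda>\<omega>. \<lambda>i\<in>I. \<eta> j i \<omega>))"
      unfolding Yv_def using cindep indep_vars_iff_distr_eq_PiM'[OF J0 rvY] by simp
    also have "\<dots> = PiM J (\<lambda>_. Q)" by (rule PiM_cong) (auto simp: Q_def cdist)
    finally show ?thesis .
  qed
  define g where "g y = (\<lambda>i\<in>I. y (b i) i)" for y :: "nat \<Rightarrow> nat \<Rightarrow> complex"
  have gm: "g \<in> measurable ?R ?B" unfolding g_def
  proof (rule measurable_restrict)
    fix i assume i: "i \<in> I"
    show "(\<lambda>y. y (b i) i) \<in> measurable ?R borel"
      using measurable_compose[OF measurable_component_singleton[of "b i" J "\<lambda>_. ?B"] measurable_component_singleton[of i I "\<lambda>_. borel"]] i b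
      by auto
  qed
  have eqf: "(\<lambda>\<omega>. \<lambda>i\<in>I. \<eta> (b i) i \<omega>) = g \<circ> Yv"
    using b by (auto simp: g_def Yv_def fun_eq_iff)
  have "distr M ?B (\<lambda>\<omega>. \<lambda>i\<in>I. \<eta> (b i) i \<omega>) = distr (distr M ?R Yv) ?B g"
    unfolding eqf by (rule distr_distr[symmetric, OF gm Yvm])
  also have "\<dots> = distr (PiM J (\<lambda>_. Q)) ?B g" by (simp add: Y)
  also have "\<dots> = PiM I \<mu>"
  proof (rule PS.PiM_eqI)
    show "finite I" by fact
    show "sets (distr (PiM J (\<lambda>_. Q)) ?B g) = sets (PiM I \<mu>)"
      by (simp add: smu cong: sets_PiM_cong)
  next
    fix A assume A: "\<And>i. i \<in> I \<Longrightarrow> A i \<in> sets (\<mu> i)"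
    define C where "C j = (\<Pi>\<^sub>E i\<in>I. if b i = j then A i else UNIV)" for j
    have CB: "C j \<in> sets ?B" for j
      unfolding C_def using A by (intro sets_PiM_I_finite) (auto simp: smu I)
    have gm': "g \<in> measurable (PiM J (\<lambda>_. Q)) ?B"
      using gm by (simp add: sQ cong: measurable_cong_sets sets_PiM_cong)
    have sp: "space (PiM J (\<lambda>_. Q)) = (\<Pi>\<^sub>E j\<in>J. \<Pi>\<^sub>E i\<in>I. UNIV)"
      using sets_eq_imp_space_eq[OF sQ] by (simp add: space_PiM)
    have pre: "g -` (\<Pi>\<^sub>E i\<in>I. A i) \<inter> space (PiM J (\<lambda>_. Q)) = (\<Pi>\<^sub>E j\<in>J. C j)"
      unfolding sp C_def g_def using b by (auto simp: PiE_iff split: if_splits)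
    have "emeasure (distr (PiM J (\<lambda>_. Q)) ?B g) (\<Pi>\<^sub>E i\<in>I. A i)
        = emeasure (PiM J (\<lambda>_. Q)) (\<Pi>\<^sub>E j\<in>J. C j)"
      using A by (subst emeasure_distr[OF gm']) (auto simp: pre smu I intro!: sets_PiM_I_finite)
    also have "\<dots> = (\<Prod>j\<in>J. emeasure Q (C j))"
      using CB by (subst QQ.emeasure_PiM) (auto simp: J sQ)
    also have "\<dots> = (\<Prod>j\<in>J. \<Prod>i\<in>{i \<in> I. b i = j}. emeasure (\<mu> i) (A i))"
    proof (rule prod.cong[OF refl])
      fix j assume j: "j \<in> J"
      have "emeasure Q (C j) = (\<Prod>i\<in>I. emeasure (\<mu> i) (if b i = j then A i else UNIV))"
        unfolding Q C_def using A by (subst PS.emeasure_PiM) (auto simp: I smu)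
      also have "\<dots> = (\<Prod>i\<in>I. if b i = j then emeasure (\<mu> i) (A i) else 1)"
        using prob_space.emeasure_space_1[OF probmu] smu by (intro prod.cong) auto
      also have "\<dots> = (\<Prod>i\<in>{i \<in> I. b i = j}. emeasure (\<mu> i) (A i))"
        by (rule prod.inter_filter[symmetric]) (rule I)
      finally show "emeasure Q (C j) = (\<Prod>i\<in>{i \<in> I. b i = j}. emeasure (\<mu> i) (A i))" .
    qed
    also have "\<dots> = (\<Prod>i\<in>I. emeasure (\<mu> i) (A i))"
      using prod.group[OF I(2) J, of b "\<lambda>i. emeasure (\<mu> i) (A i)"] b by auto
    finally show "emeasure (distr (PiM J (\<lambda>_. Q)) ?B g) (\<Pi>\<^sub>E i\<in>I. A i) = (\<Prod>i\<in>I. emeasure (\<mu> i) (A i))" .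
  qed
  also have "\<dots> = distr M ?B (\<lambda>\<omega>. \<lambda>i\<in>I. \<xi> i \<omega>)" using Q Q_def by simp
  finally show ?thesis .
qed




theorem proposition2p6:
  fixes M :: "'a measure"
    and x :: "nat set \<Rightarrow> 'x::banach"
    and sc :: "complex \<Rightarrow> 'x \<Rightarrow> 'x"
    and k m n :: nat
    and \<xi> :: "nat \<Rightarrow> 'a \<Rightarrow> complex"
    and \<eta> :: "nat \<Rightarrow> nat \<Rightarrow> 'a \<Rightarrow> complex"
    and p :: real
  assumes "complex_scaling sc"
    and "prob_space M"
    and "n = k * m"
    and indep: "prob_space.indep_vars M (\<lambda>_. borel) \<xi> {1..n}"
    and symm: "\<forall>i\<in>{1..n}. symmetric_rv M (\<xi> i)"
    and copies_indep: "prob_space.indep_vars M (\<lambda>_. PiM {1..n} (\<lambda>_. borel))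
                         (\<lambda>j \<omega>. \<lambda>i\<in>{1..n}. \<eta> j i \<omega>) {1..m}"
    and copies_dist: "\<forall>j\<in>{1..m}.
          distr M (PiM {1..n} (\<lambda>_. borel)) (\<lambda>\<omega>. \<lambda>i\<in>{1..n}. \<eta> j i \<omega>)
        = distr M (PiM {1..n} (\<lambda>_. borel)) (\<lambda>\<omega>. \<lambda>i\<in>{1..n}. \<xi> i \<omega>)"
    and "1 \<le> p"
  shows "ennreal (1 / real (card (Pi_km n k m))) *
           (\<Sum>\<pi>\<in>Pi_km n k m. moment_norm M (\<lambda>\<omega>. L_pi sc m x \<pi> (\<lambda>j i. \<eta> j i \<omega>)) p)
         \<le> moment_norm M (\<lambda>\<omega>. tetra_poly sc n m x (\<lambda>i. \<xi> i \<omega>)) p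
       \<and> moment_norm M (\<lambda>\<omega>. tetra_poly sc n m x (\<lambda>i. \<xi> i \<omega>)) p
         \<le> ennreal (exp (real m) / real (card (Pi_km n k m))) *
           (\<Sum>\<pi>\<in>Pi_km n k m. moment_norm M (\<lambda>\<omega>. L_pi sc m x \<pi> (\<lambda>j i. \<eta> j i \<omega>)) p)"
proof -
  interpret prob_space M by fact
  have sc: "complex_scaling sc" by fact
  have n: "n = k * m" by fact
  have p: "1 \<le> p" by fact
  let ?PB = "PiM {1..n} (\<lambda>_. borel :: complex measure)"
  let ?Pi = "Pi_km n k m"
  define \<xi>v where "\<xi>v \<omega> = (\<lambda>i\<in>{1..n}. \<xi> i \<omega>)" for \<omega>
  define Pz where "Pz = tetra_poly sc n m x"
  define NP where "NP = moment_norm M (\<lambda>\<omega>. tetra_poly sc n m x (\<lambda>i. \<xi> i \<omega>)) p"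
  define NL where "NL \<pi> = moment_norm M (\<lambda>\<omega>. L_pi sc m x \<pi> (\<lambda>j i. \<eta> j i \<omega>)) p" for \<pi>
  have rv\<xi>: "\<And>i. i \<in> {1..n} \<Longrightarrow> \<xi> i \<in> borel_measurable M"
    using indep unfolding indep_vars_def by auto
  have \<xi>vm: "\<xi>v \<in> measurable M ?PB"
    unfolding \<xi>v_def by (rule measurable_restrict) (rule rv\<xi>)
  have rv\<eta>: "\<And>j. j \<in> {1..m} \<Longrightarrow> (\<lambda>\<omega>. \<lambda>i\<in>{1..n}. \<eta> j i \<omega>) \<in> measurable M ?PB"
    using copies_indep unfolding indep_vars_def by auto
  have \<eta>m: "(\<lambda>\<omega>. \<eta> j i \<omega>) \<in> borel_measurable M" if j: "j \<in> {1..m}" and i: "i \<in> {1..n}" for j i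
  proof -
    have "(\<lambda>\<omega>. (\<lambda>i\<in>{1..n}. \<eta> j i \<omega>) i) \<in> borel_measurable M"
      by (rule measurable_compose[OF rv\<eta>[OF j] measurable_component_singleton[OF i]])
    then show ?thesis using i by simp
  qed
  have NPeq: "NP = moment_norm M (\<lambda>\<omega>. Pz (\<xi>v \<omega>)) p"
    unfolding NP_def Pz_def \<xi>v_def by (simp only: tetra_restrict)
  have normPz: "(\<lambda>z. norm (Pz z)) \<in> borel_measurable ?PB"
    unfolding Pz_def by (rule fdmeas_norm[OF fdmeas_tetra[OF sc]])

  have L\<pi>: "NL \<pi> = moment_norm M (\<lambda>\<omega>. Fpi sc m x \<pi> (\<xi>v \<omega>)) p" if \<pi>: "\<pi> \<in> ?Pi" for \<pi>
  proof -
    define \<eta>\<pi> where "\<eta>\<pi> \<omega> = (\<lambda>i\<in>{1..n}. \<eta> (blk \<pi> m i) i \<omega>)" for \<omega>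
    have eq: "L_pi sc m x \<pi> (\<lambda>j i. \<eta> j i \<omega>) = Fpi sc m x \<pi> (\<eta>\<pi> \<omega>)" for \<omega>
      unfolding L_pi_eq[OF \<pi> n] \<eta>\<pi>_def Fpi_restrict[OF \<pi> n] ..
    have b: "\<forall>i\<in>{1..n}. blk \<pi> m i \<in> {1..m}" using blk_ex[OF \<pi> n] by auto
    have \<eta>\<pi>m: "\<eta>\<pi> \<in> measurable M ?PB"
      unfolding \<eta>\<pi>_def by (rule measurable_restrict) (use b \<eta>m in auto)
    have D: "distr M ?PB \<eta>\<pi> = distr M ?PB \<xi>v"
    proof (cases "n = 0")
      case True
      then have "\<eta>\<pi> = \<xi>v" by (auto simp: \<eta>\<pi>_def \<xi>v_def fun_eq_iff)
      then show ?thesis by simp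
    next
      case False
      show ?thesis unfolding \<eta>\<pi>_def \<xi>v_def
        by (rule distr_blocks[OF indep _ _ _ copies_indep copies_dist b]) (use False in auto)
    qed
    show ?thesis
      unfolding NL_def eq
      by (rule moment_norm_distr[OF D \<eta>\<pi>m \<xi>vm fdmeas_norm[OF fdmeas_Fpi[OF \<pi> n sc]]])
  qed
  let ?E = "\<Pi>\<^sub>E j\<in>{1..m}. {-1, 1::real}"
  have finE: "finite ?E" by (intro finite_PiE) auto
  have cardE: "card ?E = 2 ^ m" by (simp add: card_PiE numeral_2_eq_2)
  have low\<pi>: "moment_norm M (\<lambda>\<omega>. Fpi sc m x \<pi> (\<xi>v \<omega>)) p \<le> NP" if \<pi>: "\<pi> \<in> ?Pi" for \<pi>
  proof -
    define U where "U \<epsilon> \<omega> = (\<lambda>i\<in>{1..n}. complex_of_real (\<epsilon> (blk \<pi> m i)) * \<xi> i \<omega>)" for \<epsilon> :: "nat \<Rightarrow> real" and \<omega>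
    have Um: "U \<epsilon> \<in> measurable M ?PB" for \<epsilon>
      unfolding U_def by (rule measurable_restrict) (use rv\<xi> in auto)
    have UD: "distr M ?PB (U \<epsilon>) = distr M ?PB \<xi>v" if \<epsilon>: "\<epsilon> \<in> ?E" for \<epsilon>
    proof (cases "n = 0")
      case True
      then have "U \<epsilon> = \<xi>v" by (auto simp: U_def \<xi>v_def fun_eq_iff)
      then show ?thesis by simp
    next
      case False
      have s: "\<forall>i\<in>{1..n}. \<epsilon> (blk \<pi> m i) = 1 \<or> \<epsilon> (blk \<pi> m i) = -1"
        using blk_ex[OF \<pi> n] \<epsilon> by (auto simp: PiE_iff)
      show ?thesis unfolding U_def \<xi>v_def
        by (rule distr_flip[OF indep _ symm s]) (use False in auto)
    qed
    have NU: "moment_norm M (\<lambda>\<omega>. Pz (U \<epsilon> \<omega>)) p = NP" if \<epsilon>: "\<epsilon> \<in> ?E" for \<epsilon>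
      using moment_norm_distr[OF UD[OF \<epsilon>] Um \<xi>vm normPz] NPeq by simp
    have fd: "fdmeas M (\<lambda>\<omega>. Pz (U \<epsilon> \<omega>))" for \<epsilon>
      unfolding Pz_def by (rule fdmeas_comp[OF fdmeas_tetra[OF sc] Um])
    have fd2: "fdmeas M (\<lambda>\<omega>. (\<Prod>j\<in>{1..m}. \<epsilon> j) *\<^sub>R Pz (U \<epsilon> \<omega>))" for \<epsilon>
      by (rule fdmeas_scale[OF fd]) simp
    have eqF: "Fpi sc m x \<pi> (\<xi>v \<omega>) = (1 / 2 ^ m :: real) *\<^sub>R (\<Sum>\<epsilon>\<in>?E. (\<Prod>j\<in>{1..m}. \<epsilon> j) *\<^sub>R Pz (U \<epsilon> \<omega>))" for \<omega>
    proof -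
      have "Pz (U \<epsilon> \<omega>) = tetra_poly sc n m x (\<lambda>i. complex_of_real (\<epsilon> (blk \<pi> m i)) * \<xi>v \<omega> i)" for \<epsilon>
      proof -
        have "U \<epsilon> \<omega> = restrict (\<lambda>i. complex_of_real (\<epsilon> (blk \<pi> m i)) * \<xi>v \<omega> i) {1..n}"
          by (auto simp: U_def \<xi>v_def fun_eq_iff)
        then show ?thesis unfolding Pz_def by (simp only: tetra_restrict)
      qed
      then have "(\<Sum>\<epsilon>\<in>?E. (\<Prod>j\<in>{1..m}. \<epsilon> j) *\<^sub>R Pz (U \<epsilon> \<omega>)) = (2 ^ m :: real) *\<^sub>R Fpi sc m x \<pi> (\<xi>v \<omega>)"
        using sign_avg[OF \<pi> n sc, of x "\<xi>v \<omega>"] by simp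
      then show ?thesis by simp
    qed
    have "moment_norm M (\<lambda>\<omega>. Fpi sc m x \<pi> (\<xi>v \<omega>)) p
        = moment_norm M (\<lambda>\<omega>. (1 / 2 ^ m :: real) *\<^sub>R (\<Sum>\<epsilon>\<in>?E. (\<Prod>j\<in>{1..m}. \<epsilon> j) *\<^sub>R Pz (U \<epsilon> \<omega>))) p"
      by (simp only: eqF)
    also have "\<dots> = ennreal \<bar>1 / 2 ^ m\<bar> * moment_norm M (\<lambda>\<omega>. \<Sum>\<epsilon>\<in>?E. (\<Prod>j\<in>{1..m}. \<epsilon> j) *\<^sub>R Pz (U \<epsilon> \<omega>)) p"
      by (rule moment_norm_scale[OF fdmeas_norm[OF fdmeas_sum[OF fd2]] p])
    also have "\<dots> \<le> ennreal \<bar>1 / 2 ^ m\<bar> * (\<Sum>\<epsilon>\<in>?E. moment_norm M (\<lambda>\<omega>. (\<Prod>j\<in>{1..m}. \<epsilon> j) *\<^sub>R Pz (U \<epsilon> \<omega>)) p)"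
      by (intro mult_left_mono moment_norm_sum[OF finE fd2 p]) auto
    also have "(\<Sum>\<epsilon>\<in>?E. moment_norm M (\<lambda>\<omega>. (\<Prod>j\<in>{1..m}. \<epsilon> j) *\<^sub>R Pz (U \<epsilon> \<omega>)) p) = (\<Sum>\<epsilon>\<in>?E. NP)"
    proof (intro sum.cong refl)
      fix \<epsilon> assume \<epsilon>: "\<epsilon> \<in> ?E"
      have "\<bar>\<Prod>j\<in>{1..m}. \<epsilon> j\<bar> = 1"
        using \<epsilon> by (auto simp: abs_prod PiE_iff intro!: prod.neutral)
      then show "moment_norm M (\<lambda>\<omega>. (\<Prod>j\<in>{1..m}. \<epsilon> j) *\<^sub>R Pz (U \<epsilon> \<omega>)) p = NP"
        using moment_norm_scale[OF fdmeas_norm[OF fd] p, of "\<Prod>j\<in>{1..m}. \<epsilon> j"] NU[OF \<epsilon>] by simp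
    qed
    also have "ennreal \<bar>1 / 2 ^ m\<bar> * (\<Sum>\<epsilon>\<in>?E. NP) = NP"
    proof -
      have "ennreal \<bar>1 / 2 ^ m\<bar> * (\<Sum>\<epsilon>\<in>?E. NP) = ennreal (1 / 2 ^ m) * (ennreal (2 ^ m) * NP)"
        using cardE by (simp add: ennreal_power[symmetric])
      also have "\<dots> = (ennreal (1 / 2 ^ m) * ennreal (2 ^ m)) * NP" by (simp add: mult.assoc)
      also have "ennreal (1 / 2 ^ m) * ennreal (2 ^ m) = 1"
        by (subst ennreal_mult[symmetric]) auto
      finally show ?thesis by simp
    qed
    finally show ?thesis .
  qed
  have NLle: "NL \<pi> \<le> NP" if "\<pi> \<in> ?Pi" for \<pi> using L\<pi>[OF that] low\<pi>[OF that] by simp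
  have lower: "ennreal (1 / real (card ?Pi)) * (\<Sum>\<pi>\<in>?Pi. NL \<pi>) \<le> NP"
  proof (cases "card ?Pi = 0")
    case True
    then show ?thesis by simp
  next
    case False
    have "(\<Sum>\<pi>\<in>?Pi. NL \<pi>) \<le> (\<Sum>\<pi>\<in>?Pi. NP)" by (rule sum_mono) (rule NLle)
    also have "\<dots> = ennreal (real (card ?Pi)) * NP" by (simp add: ennreal_of_nat_eq_real_of_nat)
    finally have "ennreal (1 / real (card ?Pi)) * (\<Sum>\<pi>\<in>?Pi. NL \<pi>) \<le> ennreal (1 / real (card ?Pi)) * (ennreal (real (card ?Pi)) * NP)"
      by (rule mult_left_mono) simp
    also have "\<dots> = (ennreal (1 / real (card ?Pi)) * ennreal (real (card ?Pi))) * NP" by (simp add: mult.assoc)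
    also have "ennreal (1 / real (card ?Pi)) * ennreal (real (card ?Pi)) = 1"
      using False by (subst ennreal_mult[symmetric]) auto
    finally show ?thesis by simp
  qed
  define S where "S = {A. A \<subseteq> {1..n} \<and> card A = m}"
  have upper: "NP \<le> ennreal (exp (real m) / real (card ?Pi)) * (\<Sum>\<pi>\<in>?Pi. NL \<pi>)"
  proof (cases "S = {}")
    case True
    then have "tetra_poly sc n m x z = 0" for z unfolding tetra_poly_def S_def[symmetric] by simp
    then have "NP = 0" unfolding NP_def using moment_norm_zero[of p M] p by simp
    then show ?thesis by simp
  next
    case False
    then obtain A0 where A0: "A0 \<in> S" by auto
    define c where "c = card {B \<in> ?Pi. A0 \<in> transv m B}"
    have cnt: "card {B \<in> ?Pi. A \<in> transv m B} = c" if A: "A \<in> S" for A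
      using cnt_le[OF n, of A A0] cnt_le[OF n, of A0 A] A A0 unfolding S_def c_def by (auto intro: le_antisym)
    have "(\<Sum>A\<in>S. card {B \<in> ?Pi. A \<in> transv m B}) = card ?Pi * k ^ m"
      using sum_cnt[OF n] unfolding S_def .
    moreover have "(\<Sum>A\<in>S. card {B \<in> ?Pi. A \<in> transv m B}) = card S * c"
      using cnt by simp
    ultimately have cS: "card S * c = card ?Pi * k ^ m" by simp
    have cardS: "card S = n choose m" unfolding S_def using n_subsets[of "{1..n}" m] by simp
    have mn: "m \<le> n"
    proof -
      have "card A0 \<le> card {1..n}" using A0 unfolding S_def by (intro card_mono) auto
      then show ?thesis using A0 unfolding S_def by simp
    qed
    have k0: "k ^ m > 0"
    proof (cases "m = 0")
      case False
      then have "k \<noteq> 0" using mn n by auto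
      then show ?thesis by simp
    qed simp
    have Pi0: "card ?Pi > 0"
      using Pi_km_nonempty[of k m] n finite_Pi_km[of n k m] by (simp add: card_gt_0_iff)
    have c0: "c > 0" using cS k0 Pi0 by (cases c) auto
    have key: "real (card ?Pi) \<le> exp (real m) * real c"
    proof -
      have "real (card ?Pi) * real k ^ m = real (n choose m) * real c"
        using cS cardS by (metis of_nat_mult of_nat_power)
      also have "\<dots> \<le> (exp (real m) * real k ^ m) * real c"
        using binom_bound[of k m] n by (intro mult_right_mono) auto
      finally have "real (card ?Pi) * real k ^ m \<le> (exp (real m) * real c) * real k ^ m"
        by (simp add: algebra_simps)
      moreover have "real k ^ m > 0" using k0 by simp
      ultimately show ?thesis by simp
    qed
    have Pzsum: "Pz z = (1 / real c) *\<^sub>R (\<Sum>\<pi>\<in>?Pi. Fpi sc m x \<pi> z)" for z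
    proof -
      have "(\<Sum>\<pi>\<in>?Pi. Fpi sc m x \<pi> z) = (\<Sum>A\<in>S. real c *\<^sub>R sc (zA z A) (x A))"
        unfolding sum_Fpi[OF n] S_def[symmetric] using cnt by (intro sum.cong refl) simp
      also have "\<dots> = real c *\<^sub>R Pz z"
        by (simp add: Pz_def tetra_poly_def S_def scaleR_sum_right)
      finally show ?thesis using c0 by simp
    qed
    have fdF: "fdmeas M (\<lambda>\<omega>. Fpi sc m x \<pi> (\<xi>v \<omega>))" if \<pi>: "\<pi> \<in> ?Pi" for \<pi>
      by (rule fdmeas_comp[OF fdmeas_Fpi[OF \<pi> n sc] \<xi>vm])
    have "NP = moment_norm M (\<lambda>\<omega>. (1 / real c) *\<^sub>R (\<Sum>\<pi>\<in>?Pi. Fpi sc m x \<pi> (\<xi>v \<omega>))) p"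
      unfolding NPeq Pzsum ..
    also have "\<dots> = ennreal \<bar>1 / real c\<bar> * moment_norm M (\<lambda>\<omega>. \<Sum>\<pi>\<in>?Pi. Fpi sc m x \<pi> (\<xi>v \<omega>)) p"
      by (rule moment_norm_scale[OF fdmeas_norm[OF fdmeas_sum[OF fdF]] p])
    also have "\<dots> \<le> ennreal \<bar>1 / real c\<bar> * (\<Sum>\<pi>\<in>?Pi. moment_norm M (\<lambda>\<omega>. Fpi sc m x \<pi> (\<xi>v \<omega>)) p)"
      by (intro mult_left_mono moment_norm_sum[OF finite_Pi_km fdF p]) auto
    also have "(\<Sum>\<pi>\<in>?Pi. moment_norm M (\<lambda>\<omega>. Fpi sc m x \<pi> (\<xi>v \<omega>)) p) = (\<Sum>\<pi>\<in>?Pi. NL \<pi>)"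
      using L\<pi> by simp
    also have "ennreal \<bar>1 / real c\<bar> * (\<Sum>\<pi>\<in>?Pi. NL \<pi>) \<le> ennreal (exp (real m) / real (card ?Pi)) * (\<Sum>\<pi>\<in>?Pi. NL \<pi>)"
    proof (intro mult_right_mono ennreal_leI)
      show "\<bar>1 / real c\<bar> \<le> exp (real m) / real (card ?Pi)"
        using key c0 Pi0 by (simp add: field_simps)
    qed simp
    finally show ?thesis .
  qed
  show ?thesis using lower upper unfolding NP_def NL_def by simp
qed


end
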